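(* Assume $\mathrm{char}(\mathcal{O}/\mathfrak{p})\neq 2$, and let $k,n\ge1$. Let $G$ be a group with $\mathrm{Hei}_{2k+1}(\mathcal{O}/\mathfrak{p}^n)\subseteq G\subseteq \mathbf{U}_{k+2}(\mathcal{O}/\mathfrak{p}^n)$. Then $m_{\mathsf{faithful}}(G)=m_{\mathsf{faithful}}\big(\mathrm{Hei}_{2k+1}(\mathcal{O}/\mathfrak{p}^n)\big)$.
   Context: For a finite group $G$, $m_{\mathsf{faithful}}(G)$ denotes the smallest dimension of a faithful complex representation of $G$. $F$ is a non-Archimedean local field with ring of integers $\mathcal{O}$ and maximal ideal $\mathfrak{p}$. For a commutative unital ring $R$, $\mathbf{U}_{m}(R)\subseteq \mathrm{GL}_m(R)$ is the group of upper unitriangular $m\times m$ matrices, and the Heisenberg group $\mathrm{Hei}_{2k+1}(R)$ is the subgroup of $\mathbf{U}_{k+2}(R)$ consisting of the matrices $\begin{pmatrix}1&\mathbf{x}&z\\0&I_k&\mathbf{y}^T\\0&0&1\end{pmatrix}$ with $\mathbf{x},\mathbf{y}\in R^k$, $z\in R$. *)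

theory Defs
  imports "Jordan_Normal_Form.Matrix" "HOL-Algebra.Group"
begin

definition GL_mat :: "nat \<Rightarrow> complex mat monoid" where
  "GL_mat d = \<lparr> carrier = {A \<in> carrier_mat d d. invertible_mat A},
                mult = (\<lambda>A B. A * B), one = 1\<^sub>m d \<rparr>"

definition faithful_rep :: "('g, 'b) monoid_scheme \<Rightarrow> nat \<Rightarrow> ('g \<Rightarrow> complex mat) \<Rightarrow> bool" where
  "faithful_rep G d \<rho> \<longleftrightarrow> \<rho> \<in> hom G (GL_mat d) \<and> inj_on \<rho> (carrier G)"

definition m_faithful :: "('g, 'b) monoid_scheme \<Rightarrow> nat" where
  "m_faithful G = (LEAST d. \<exists>\<rho>. faithful_rep G d \<rho>)"

definition U_mat :: "nat \<Rightarrow> ('a::comm_ring_1) mat monoid" where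
  "U_mat m = \<lparr> carrier = {A \<in> carrier_mat m m. (\<forall>i<m. A $$ (i,i) = 1) \<and>
                                  (\<forall>i<m. \<forall>j<i. A $$ (i,j) = 0)},
               mult = (\<lambda>A B. A * B), one = 1\<^sub>m m \<rparr>"

text \<open>Heisenberg group Hei_{2k+1}(R) inside U_{k+2}(R): the unitriangular matrices whose
  middle k x k block (rows/columns 1..k, 0-based) is the identity.\<close>
definition Hei_set :: "nat \<Rightarrow> ('a::comm_ring_1) mat set" where
  "Hei_set k = {A \<in> carrier (U_mat (k+2)). \<forall>i j. 1 \<le> i \<and> i < j \<and> j \<le> k \<longrightarrow> A $$ (i,j) = 0}"

definition Hei_group :: "nat \<Rightarrow> ('a::comm_ring_1) mat monoid" where
  "Hei_group k = (U_mat (k+2)) \<lparr> carrier := Hei_set k \<rparr>"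

text \<open>Finite commutative local ring with principal maximal ideal (finite chain ring),
  i.e. the rings O/p^n for O the integers of a non-Archimedean local field and n \<ge> 1.
  The maximal ideal is the set of non-units.\<close>
definition finite_chain_ring :: "'a::comm_ring_1 itself \<Rightarrow> bool" where
  "finite_chain_ring _ \<longleftrightarrow> finite (UNIV :: 'a set) \<and> (0::'a) \<noteq> 1 \<and>
     (\<exists>\<pi>::'a. \<forall>x. (\<not> x dvd 1) \<longleftrightarrow> \<pi> dvd x)"

end

theory Submission
  imports Defs "Jordan_Normal_Form.VS_Connect" "Jordan_Normal_Form.Determinant"
begin


lemma mat_mult_entry:
  assumes "A \<in> carrier_mat m m" "B \<in> carrier_mat m m" "i < m" "j < m"
  shows "(A * B) $$ (i,j) = (\<Sum>l<m. A $$ (i,l) * B $$ (l,j))"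
  using assms by (simp add: scalar_prod_def lessThan_atLeast0)

lemma U_carrier:
  "A \<in> carrier (U_mat m) \<longleftrightarrow> A \<in> carrier_mat m m \<and> (\<forall>i<m. A $$ (i,i) = 1) \<and> (\<forall>i<m. \<forall>j<i. A $$ (i,j) = 0)"
  by (simp add: U_mat_def)

lemma U_mult_closed:
  fixes A B :: "'a::comm_ring_1 mat"
  assumes A: "A \<in> carrier (U_mat m)" and B: "B \<in> carrier (U_mat m)"
  shows "A * B \<in> carrier (U_mat m)"
proof -
  have Ac: "A \<in> carrier_mat m m" and Bc: "B \<in> carrier_mat m m" using A B by (auto simp: U_carrier)
  have diag: "(A * B) $$ (i,i) = 1" if i: "i < m" for i
  proof -
    have "(A * B) $$ (i,i) = (\<Sum>l<m. A $$ (i,l) * B $$ (l,i))" using mat_mult_entry[OF Ac Bc i i] .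
    also have "\<dots> = A $$ (i,i) * B $$ (i,i) + (\<Sum>l\<in>{..<m} - {i}. A $$ (i,l) * B $$ (l,i))"
      by (rule sum.remove) (use i in auto)
    also have "(\<Sum>l\<in>{..<m} - {i}. A $$ (i,l) * B $$ (l,i)) = 0"
    proof (rule sum.neutral, intro ballI)
      fix l assume l: "l \<in> {..<m} - {i}"
      show "A $$ (i,l) * B $$ (l,i) = 0"
      proof (cases "l < i")
        case True then show ?thesis using A i by (auto simp: U_carrier)
      next
        case False then have "i < l" using l by auto
        then show ?thesis using B l by (auto simp: U_carrier)
      qed
    qed
    finally show ?thesis using A B i by (auto simp: U_carrier)
  qed
  have low: "(A * B) $$ (i,j) = 0" if i: "i < m" and j: "j < i" for i j
  proof -
    have "(A * B) $$ (i,j) = (\<Sum>l<m. A $$ (i,l) * B $$ (l,j))" using mat_mult_entry[OF Ac Bc i] i j by auto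
    also have "\<dots> = 0"
    proof (rule sum.neutral, intro ballI)
      fix l assume l: "l \<in> {..<m}"
      show "A $$ (i,l) * B $$ (l,j) = 0"
      proof (cases "l < i")
        case True then show ?thesis using A i by (auto simp: U_carrier)
      next
        case False then have "j < l" using j by auto
        then show ?thesis using B l by (auto simp: U_carrier)
      qed
    qed
    finally show ?thesis .
  qed
  show ?thesis using Ac Bc diag low by (auto simp: U_carrier)
qed

lemma finite_carrier_mat_fin:
  assumes finU: "finite (UNIV :: ('a::zero) set)"
  shows "finite (carrier_mat n m :: 'a mat set)"
proof -
  let ?R = "{..<n} \<times> {..<m}"
  have fin: "finite {f :: nat \<times> nat \<Rightarrow> 'a. \<forall>x. (x \<in> ?R \<longrightarrow> f x \<in> UNIV) \<and> (x \<notin> ?R \<longrightarrow> f x = 0)}"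
    by (rule finite_set_of_finite_funs) (auto simp: finU)
  have "(carrier_mat n m :: 'a mat set) \<subseteq> (\<lambda>f. mat n m f) ` {f. \<forall>x. (x \<in> ?R \<longrightarrow> f x \<in> UNIV) \<and> (x \<notin> ?R \<longrightarrow> f x = 0)}"
  proof
    fix A :: "'a mat" assume A: "A \<in> carrier_mat n m"
    have "A = mat n m (\<lambda>p. if p \<in> ?R then A $$ p else 0)"
      by (rule eq_matI) (use A in auto)
    then show "A \<in> (\<lambda>f. mat n m f) ` {f. \<forall>x. (x \<in> ?R \<longrightarrow> f x \<in> UNIV) \<and> (x \<notin> ?R \<longrightarrow> f x = 0)}"
      by auto
  qed
  then show ?thesis using finite_surj[OF fin] by blast
qed

lemma U_det:
  fixes A :: "'a::comm_ring_1 mat"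
  assumes A: "A \<in> carrier (U_mat m)"
  shows "det A = 1"
proof -
  have Ac: "A \<in> carrier_mat m m" using A by (auto simp: U_carrier)
  have ut: "upper_triangular A" using A unfolding upper_triangular_def by (auto simp: U_carrier)
  have "diag_mat A = replicate m 1" using A
    by (intro nth_equalityI) (auto simp: diag_mat_def U_carrier)
  then show ?thesis using det_upper_triangular[OF ut Ac] by simp
qed

lemma U_group:
  assumes fin: "finite (UNIV :: 'a set)"
  shows "group (U_mat m :: ('a::comm_ring_1) mat monoid)"
proof (rule groupI)
  show "\<one>\<^bsub>U_mat m\<^esub> \<in> carrier (U_mat m)" by (auto simp: U_mat_def)
  show "x \<otimes>\<^bsub>U_mat m\<^esub> y \<in> carrier (U_mat m)" if "x \<in> carrier (U_mat m)" "y \<in> carrier (U_mat m)" for x y :: "'a mat"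
    using U_mult_closed[OF that] by (simp add: U_mat_def)
  show "x \<otimes>\<^bsub>U_mat m\<^esub> y \<otimes>\<^bsub>U_mat m\<^esub> z = x \<otimes>\<^bsub>U_mat m\<^esub> (y \<otimes>\<^bsub>U_mat m\<^esub> z)"
    if "x \<in> carrier (U_mat m)" "y \<in> carrier (U_mat m)" "z \<in> carrier (U_mat m)" for x y z :: "'a mat"
    using that by (simp add: U_mat_def assoc_mult_mat[of x m m y m z m])
  show "\<one>\<^bsub>U_mat m\<^esub> \<otimes>\<^bsub>U_mat m\<^esub> x = x" if "x \<in> carrier (U_mat m)" for x :: "'a mat"
    using that by (auto simp: U_mat_def intro: left_mult_one_mat)
  show "\<exists>y\<in>carrier (U_mat m). y \<otimes>\<^bsub>U_mat m\<^esub> x = \<one>\<^bsub>U_mat m\<^esub>" if x: "x \<in> carrier (U_mat m)" for x :: "'a mat"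
  proof -
    have xc: "x \<in> carrier_mat m m" using x by (auto simp: U_carrier)
    let ?C = "carrier (U_mat m) :: 'a mat set"
    have finC: "finite ?C"
      by (rule finite_subset[OF _ finite_carrier_mat_fin[OF fin, of m m]]) (auto simp: U_carrier)
    have adj: "x * adj_mat x = 1\<^sub>m m" "adj_mat x * x = 1\<^sub>m m"
      using adj_mat[OF xc] U_det[OF x] by auto
    have adjc: "adj_mat x \<in> carrier_mat m m" using adj_mat[OF xc] by auto
    have inj: "inj_on (\<lambda>y. y * x) ?C"
    proof
      fix y z assume y: "y \<in> ?C" and z: "z \<in> ?C" and eq: "y * x = z * x"
      have yc: "y \<in> carrier_mat m m" and zc: "z \<in> carrier_mat m m" using y z by (auto simp: U_carrier)
      have "y = y * x * adj_mat x" using adj yc xc adjc by (simp add: assoc_mult_mat[OF yc xc adjc])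
      also have "\<dots> = z * x * adj_mat x" using eq by simp
      also have "\<dots> = z" using adj zc xc adjc by (simp add: assoc_mult_mat[OF zc xc adjc])
      finally show "y = z" .
    qed
    have sub: "(\<lambda>y. y * x) ` ?C \<subseteq> ?C" using U_mult_closed[OF _ x] by auto
    have "(\<lambda>y. y * x) ` ?C = ?C" by (rule endo_inj_surj[OF finC sub inj])
    moreover have "1\<^sub>m m \<in> ?C" by (auto simp: U_mat_def)
    ultimately obtain y where "y \<in> ?C" "y * x = 1\<^sub>m m" by (metis (no_types, lifting) imageE)
    then show ?thesis by (auto simp: U_mat_def)
  qed
qed


lemma monomial_rep:
  fixes G :: "('g,'b) monoid_scheme" and T :: "'t set"
    and act :: "'t \<Rightarrow> 'g \<Rightarrow> 't" and cf :: "'t \<Rightarrow> 'g \<Rightarrow> complex"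
  assumes grp: "group G" and finT: "finite T"
    and act_T: "\<And>t g. t \<in> T \<Longrightarrow> g \<in> carrier G \<Longrightarrow> act t g \<in> T"
    and act_mult: "\<And>t g h. t \<in> T \<Longrightarrow> g \<in> carrier G \<Longrightarrow> h \<in> carrier G \<Longrightarrow>
         act t (g \<otimes>\<^bsub>G\<^esub> h) = act (act t g) h"
    and act_one: "\<And>t. t \<in> T \<Longrightarrow> act t \<one>\<^bsub>G\<^esub> = t"
    and cf_mult: "\<And>t g h. t \<in> T \<Longrightarrow> g \<in> carrier G \<Longrightarrow> h \<in> carrier G \<Longrightarrow>
         cf t (g \<otimes>\<^bsub>G\<^esub> h) = cf t g * cf (act t g) h"
    and cf_one: "\<And>t. t \<in> T \<Longrightarrow> cf t \<one>\<^bsub>G\<^esub> = 1"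
    and faith: "\<And>g h. g \<in> carrier G \<Longrightarrow> h \<in> carrier G \<Longrightarrow>
         (\<forall>t\<in>T. act t g = act t h \<and> cf t g = cf t h) \<Longrightarrow> g = h"
  shows "\<exists>\<rho>. faithful_rep G (card T) \<rho>"
proof -
  interpret group G by (rule grp)
  define n where "n = card T"
  obtain e where e: "bij_betw e {0..<n} T" using ex_bij_betw_nat_finite[OF finT] n_def by auto
  have e_in: "e i \<in> T" if "i < n" for i using e that by (auto simp: bij_betw_def)
  have e_inj: "e i = e j \<longleftrightarrow> i = j" if "i < n" "j < n" for i j
    using e that by (auto simp: bij_betw_def inj_on_def)
  define idx where "idx t = inv_into {0..<n} e t" for t
  have idx: "idx t < n" "e (idx t) = t" if "t \<in> T" for t
    using e that unfolding idx_def bij_betw_def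
    by (auto intro: inv_into_into[of t e "{0..<n}", simplified] f_inv_into_f)
  define M where "M g = mat n n (\<lambda>(i,j). if e j = act (e i) g then cf (e i) g else 0)" for g
  have Mc: "M g \<in> carrier_mat n n" for g by (simp add: M_def)
  have Mmult: "M g * M h = M (g \<otimes>\<^bsub>G\<^esub> h)" if g: "g \<in> carrier G" and h: "h \<in> carrier G" for g h
  proof (rule eq_matI)
    fix i j assume i: "i < dim_row (M (g \<otimes>\<^bsub>G\<^esub> h))" and j: "j < dim_col (M (g \<otimes>\<^bsub>G\<^esub> h))"
    then have i: "i < n" and j: "j < n" by (auto simp: M_def)
    let ?s0 = "act (e i) g"
    have s0: "?s0 \<in> T" using act_T[OF e_in[OF i] g] .
    define F where "F s = (if s = ?s0 then cf (e i) g * (if e j = act s h then cf s h else 0) else 0)" for s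
    have "(M g * M h) $$ (i,j) = (\<Sum>l<n. M g $$ (i,l) * M h $$ (l,j))"
      using mat_mult_entry[OF Mc Mc i j] .
    also have "\<dots> = (\<Sum>l\<in>{0..<n}. F (e l))"
      by (rule sum.cong) (auto simp: M_def F_def i j)
    also have "\<dots> = (\<Sum>s\<in>T. F s)" by (rule sum.reindex_bij_betw[OF e])
    also have "\<dots> = cf (e i) g * (if e j = act ?s0 h then cf ?s0 h else 0)"
      unfolding F_def using s0 finT by (simp add: sum.delta)
    also have "\<dots> = M (g \<otimes>\<^bsub>G\<^esub> h) $$ (i,j)"
      using i j act_mult[OF e_in[OF i] g h] cf_mult[OF e_in[OF i] g h] by (simp add: M_def)
    finally show "(M g * M h) $$ (i,j) = M (g \<otimes>\<^bsub>G\<^esub> h) $$ (i,j)" .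
  qed (auto simp: M_def)
  have Mone: "M \<one>\<^bsub>G\<^esub> = 1\<^sub>m n"
    by (rule eq_matI) (auto simp: M_def act_one cf_one e_in e_inj)
  have Minv: "invertible_mat (M g)" if g: "g \<in> carrier G" for g
  proof -
    have "M g * M (inv\<^bsub>G\<^esub> g) = 1\<^sub>m n" "M (inv\<^bsub>G\<^esub> g) * M g = 1\<^sub>m n"
      using Mmult[OF g inv_closed[OF g]] Mmult[OF inv_closed[OF g] g] g Mone by auto
    then show ?thesis unfolding invertible_mat_def inverts_mat_def using Mc[of g] Mc[of "inv\<^bsub>G\<^esub> g"]
      by (auto simp: square_mat.simps)
  qed
  have cf_nz: "cf t g \<noteq> 0" if t: "t \<in> T" and g: "g \<in> carrier G" for t g
  proof
    assume "cf t g = 0"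
    then have "cf t (g \<otimes>\<^bsub>G\<^esub> inv\<^bsub>G\<^esub> g) = 0" using cf_mult[OF t g inv_closed[OF g]] by simp
    then show False using cf_one[OF t] g by simp
  qed
  have hom: "M \<in> hom G (GL_mat n)"
    unfolding hom_def GL_mat_def using Mc Minv Mmult by auto
  have inj: "inj_on M (carrier G)"
  proof
    fix g h assume g: "g \<in> carrier G" and h: "h \<in> carrier G" and eq: "M g = M h"
    show "g = h"
    proof (rule faith[OF g h], intro ballI)
      fix t assume t: "t \<in> T"
      define i where "i = idx t"
      define j where "j = idx (act t g)"
      have i: "i < n" "e i = t" using idx[OF t] i_def by auto
      have j: "j < n" "e j = act t g" using idx[OF act_T[OF t g]] j_def by auto
      have "M g $$ (i,j) = cf t g" using i j by (simp add: M_def)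
      moreover have "M h $$ (i,j) = (if act t g = act t h then cf t h else 0)" using i j by (simp add: M_def)
      ultimately have "(if act t g = act t h then cf t h else 0) = cf t g" using eq by simp
      then show "act t g = act t h \<and> cf t g = cf t h" using cf_nz[OF t g] by (auto split: if_splits)
    qed
  qed
  show ?thesis unfolding faithful_rep_def n_def[symmetric] using hom inj by blast
qed

lemma regular_rep:
  assumes grp: "group G" and fin: "finite (carrier G)"
  shows "\<exists>d \<rho>. faithful_rep G d \<rho>"
proof -
  interpret group G by (rule grp)
  have "\<exists>\<rho>. faithful_rep G (card (carrier G)) \<rho>"
    by (rule monomial_rep[where act = "\<lambda>t g. t \<otimes>\<^bsub>G\<^esub> g" and cf = "\<lambda>_ _. 1"])
       (auto simp: grp fin m_assoc)
  then show ?thesis by blast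
qed


lemma mat_vec_sum:
  fixes A :: "'a::comm_ring_1 mat"
  assumes A: "A \<in> carrier_mat d d" and r: "r < d"
  shows "(A *\<^sub>v vec d (\<lambda>j. \<Sum>i\<in>I. g i j)) $ r = (\<Sum>i\<in>I. (A *\<^sub>v vec d (g i)) $ r)"
proof -
  have "(A *\<^sub>v vec d (\<lambda>j. \<Sum>i\<in>I. g i j)) $ r = (\<Sum>j<d. A $$ (r,j) * (\<Sum>i\<in>I. g i j))"
    using A r by (simp add: scalar_prod_def lessThan_atLeast0)
  also have "\<dots> = (\<Sum>i\<in>I. \<Sum>j<d. A $$ (r,j) * g i j)"
    by (simp add: sum_distrib_left sum.swap[of _ I])
  also have "\<dots> = (\<Sum>i\<in>I. (A *\<^sub>v vec d (g i)) $ r)"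
    using A r by (simp add: scalar_prod_def lessThan_atLeast0)
  finally show ?thesis .
qed

lemma nonzero_vec_entry:
  assumes "v \<in> carrier_vec d" "v \<noteq> 0\<^sub>v d"
  shows "\<exists>r<d. v $ r \<noteq> 0"
proof (rule ccontr)
  assume "\<not> (\<exists>r<d. v $ r \<noteq> 0)"
  then have "v = 0\<^sub>v d" using assms by (intro eq_vecI) auto
  then show False using assms by simp
qed

lemma eig_indep:
  fixes V :: "complex vec set" and Ms :: "'i \<Rightarrow> complex mat" and ev :: "complex vec \<Rightarrow> 'i \<Rightarrow> complex"
  assumes "finite V"
    and "V \<subseteq> carrier_vec d" "\<forall>v\<in>V. v \<noteq> 0\<^sub>v d"
    and "\<forall>i\<in>I. Ms i \<in> carrier_mat d d"
    and "\<forall>v\<in>V. \<forall>i\<in>I. Ms i *\<^sub>v v = ev v i \<cdot>\<^sub>v v"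
    and "\<forall>v\<in>V. \<forall>w\<in>V. v \<noteq> w \<longrightarrow> (\<exists>i\<in>I. ev v i \<noteq> ev w i)"
  shows "(\<forall>r<d. (\<Sum>v\<in>V. c v * v $ r) = 0) \<Longrightarrow> \<forall>v\<in>V. c v = 0"
  using assms
proof (induction V arbitrary: c rule: finite_induct)
  case empty then show ?case by simp
next
  case (insert u V c)
  note uV = insert.hyps(2)
  note finV = insert.hyps(1)
  have carr: "insert u V \<subseteq> carrier_vec d" using insert.prems(2) .
  have nz: "\<forall>v\<in>insert u V. v \<noteq> 0\<^sub>v d" using insert.prems(3) .
  have Ms: "\<forall>i\<in>I. Ms i \<in> carrier_mat d d" using insert.prems(4) .
  have eig: "\<forall>v\<in>insert u V. \<forall>i\<in>I. Ms i *\<^sub>v v = ev v i \<cdot>\<^sub>v v" using insert.prems(5) .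
  have dist: "\<forall>v\<in>insert u V. \<forall>w\<in>insert u V. v \<noteq> w \<longrightarrow> (\<exists>i\<in>I. ev v i \<noteq> ev w i)" using insert.prems(6) .
  have uc: "u \<in> carrier_vec d" and Vc: "V \<subseteq> carrier_vec d" using carr by auto
  have rel: "(\<Sum>v\<in>insert u V. c v * v $ r) = 0" if "r < d" for r using insert.prems(1) that by blast
  have rel2: "c u * u $ r + (\<Sum>v\<in>V. c v * v $ r) = 0" if "r < d" for r
    using rel[OF that] sum.insert[OF finV uV, of "\<lambda>v. c v * v $ r"] by simp
  have step: "(\<Sum>v\<in>V. (c v * (ev v i - ev u i)) * v $ r) = 0" if i: "i \<in> I" and r: "r < d" for i r
  proof -
    have Mi: "Ms i \<in> carrier_mat d d" using Ms i by auto
    have z: "vec d (\<lambda>r. \<Sum>v\<in>insert u V. c v * v $ r) = 0\<^sub>v d"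
      by (rule eq_vecI) (auto simp only: rel index_vec index_zero_vec dim_vec)
    have "0 = (Ms i *\<^sub>v vec d (\<lambda>r. \<Sum>v\<in>insert u V. c v * v $ r)) $ r"
      unfolding z using Mi r by simp
    also have "\<dots> = (\<Sum>v\<in>insert u V. (Ms i *\<^sub>v vec d (\<lambda>r. c v * v $ r)) $ r)"
      by (rule mat_vec_sum[OF Mi r])
    also have "\<dots> = (\<Sum>v\<in>insert u V. c v * ev v i * v $ r)"
    proof (rule sum.cong[OF refl])
      fix v assume v: "v \<in> insert u V"
      have vc: "v \<in> carrier_vec d" using v carr by auto
      have "vec d (\<lambda>r. c v * v $ r) = c v \<cdot>\<^sub>v v" using vc by (intro eq_vecI) auto
      then have "(Ms i *\<^sub>v vec d (\<lambda>r. c v * v $ r)) = c v \<cdot>\<^sub>v (Ms i *\<^sub>v v)"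
        using mult_mat_vec[OF Mi vc] by simp
      also have "Ms i *\<^sub>v v = ev v i \<cdot>\<^sub>v v" using eig v i by blast
      finally show "(Ms i *\<^sub>v vec d (\<lambda>r. c v * v $ r)) $ r = c v * ev v i * v $ r"
        using vc r by simp
    qed
    finally have a: "(\<Sum>v\<in>insert u V. c v * ev v i * v $ r) = 0" by simp
    have b: "ev u i * (\<Sum>v\<in>insert u V. c v * v $ r) = 0" using rel[OF r] by simp
    have "(\<Sum>v\<in>insert u V. (c v * (ev v i - ev u i)) * v $ r) =
          (\<Sum>v\<in>insert u V. c v * ev v i * v $ r - ev u i * (c v * v $ r))"
      by (rule sum.cong) (auto simp: algebra_simps)
    also have "\<dots> = (\<Sum>v\<in>insert u V. c v * ev v i * v $ r) - ev u i * (\<Sum>v\<in>insert u V. c v * v $ r)"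
      by (simp only: sum_subtractf sum_distrib_left)
    also have "\<dots> = 0" using a b by simp
    finally have "(\<Sum>v\<in>insert u V. (c v * (ev v i - ev u i)) * v $ r) = 0" .
    then show ?thesis using sum.insert[OF finV uV, of "\<lambda>v. (c v * (ev v i - ev u i)) * v $ r"] by simp
  qed
  have cV: "\<forall>v\<in>V. c v = 0"
  proof
    fix v assume v: "v \<in> V"
    then have "v \<noteq> u" using uV by auto
    then obtain i where i: "i \<in> I" "ev v i \<noteq> ev u i" using dist v by blast
    have "\<forall>v\<in>V. c v * (ev v i - ev u i) = 0"
      by (rule insert.IH) (use step[OF i(1)] carr nz Ms eig dist in auto)
    then show "c v = 0" using v i by auto
  qed
  obtain r where r: "r < d" "u $ r \<noteq> 0" using nonzero_vec_entry[OF uc] nz by auto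
  have "(\<Sum>v\<in>V. c v * v $ r) = 0" using cV by simp
  then have "c u * u $ r = 0" using rel2[OF r(1)] by simp
  then show ?case using r cV by auto
qed


lemma root_unity_sum:
  assumes N: "N > 0" and i: "i < N"
  shows "(\<Sum>s<N. (cis (2 * pi / N) ^ i) ^ s) = (if i = 0 then of_nat N else 0)"
proof (cases "i = 0")
  case True then show ?thesis by simp
next
  case False
  define x where "x = cis (2 * pi / N) ^ i"
  have x: "x = cis (2 * pi * real i / real N)" unfolding x_def DeMoivre by (simp add: mult_ac)
  have "x \<noteq> 1"
  proof
    assume "x = 1"
    then have "cis (2 * pi * real i / real N) = cis (2 * pi * real 0 / real N)" using x by simp
    then have "i = 0" using bij_betw_roots_unity[OF N] i N unfolding bij_betw_def inj_on_def by auto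
    then show False using False by simp
  qed
  moreover have "x ^ N = 1"
  proof -
    have "x ^ N = (cis (2 * pi / N) ^ N) ^ i" unfolding x_def by (simp add: power_mult[symmetric] mult.commute)
    also have "cis (2 * pi / N) ^ N = cis (2 * pi)" using N by (simp add: DeMoivre)
    also have "\<dots> = 1" by simp
    finally show ?thesis by simp
  qed
  ultimately have "(\<Sum>s<N. x ^ s) = 0" by (simp add: geometric_sum)
  then show ?thesis using False unfolding x_def by simp
qed

lemma pow_mat_commute:
  fixes A B :: "'a::comm_ring_1 mat"
  assumes A: "A \<in> carrier_mat d d" and B: "B \<in> carrier_mat d d" and AB: "A * B = B * A"
  shows "A * B ^\<^sub>m i = B ^\<^sub>m i * A"
proof (induction i)
  case 0 then show ?case using A B by simp
next
  case (Suc i)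
  have Bi: "B ^\<^sub>m i \<in> carrier_mat d d" using B by simp
  have "A * B ^\<^sub>m Suc i = (A * B ^\<^sub>m i) * B" using A B Bi by (simp add: assoc_mult_mat[OF A Bi B])
  also have "\<dots> = B ^\<^sub>m i * (A * B)" using Suc A B Bi by (simp add: assoc_mult_mat[OF Bi A B])
  also have "\<dots> = B ^\<^sub>m i * (B * A)" using AB by simp
  also have "\<dots> = B ^\<^sub>m Suc i * A" using A B Bi by (simp add: assoc_mult_mat[OF Bi B A])
  finally show ?case .
qed

lemma W_lincomb:
  fixes W :: "complex vec set"
  assumes Wc: "W \<subseteq> carrier_vec d" and add: "\<forall>u\<in>W. \<forall>u'\<in>W. u + u' \<in> W"
    and sm: "\<forall>c. \<forall>u\<in>W. c \<cdot>\<^sub>v u \<in> W" and w: "w \<in> W"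
    and fin: "finite I" and f: "\<forall>i\<in>I. f i \<in> W"
  shows "vec d (\<lambda>r. \<Sum>i\<in>I. c i * f i $ r) \<in> W"
  using fin f
proof (induction I rule: finite_induct)
  case empty
  have "vec d (\<lambda>r. \<Sum>i\<in>{}. c i * f i $ r) = 0 \<cdot>\<^sub>v w" using w Wc by (intro eq_vecI) auto
  then show ?case using sm w by simp
next
  case (insert j I)
  have fj: "f j \<in> carrier_vec d" using insert Wc by auto
  have "vec d (\<lambda>r. \<Sum>i\<in>insert j I. c i * f i $ r) = c j \<cdot>\<^sub>v f j + vec d (\<lambda>r. \<Sum>i\<in>I. c i * f i $ r)"
    using insert fj by (intro eq_vecI) auto
  then show ?case using insert add sm by auto
qed

lemma common_eigvec:
  fixes F :: "complex mat set" and W :: "complex vec set"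
  assumes finF: "finite F" and Fc: "F \<subseteq> carrier_mat d d"
    and comm: "\<forall>M\<in>F. \<forall>M'\<in>F. M * M' = M' * M"
    and N: "N > 0" and ord: "\<forall>M\<in>F. M ^\<^sub>m N = 1\<^sub>m d"
    and Wc: "W \<subseteq> carrier_vec d" and add: "\<forall>u\<in>W. \<forall>u'\<in>W. u + u' \<in> W"
    and sm: "\<forall>c. \<forall>u\<in>W. c \<cdot>\<^sub>v u \<in> W" and MW: "\<forall>M\<in>F. \<forall>u\<in>W. M *\<^sub>v u \<in> W"
    and w: "w \<in> W" and w0: "w \<noteq> 0\<^sub>v d"
  shows "\<exists>v\<in>W. v \<noteq> 0\<^sub>v d \<and> (\<forall>M\<in>F. \<exists>\<alpha>. M *\<^sub>v v = \<alpha> \<cdot>\<^sub>v v)"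
proof -
  have "\<exists>v\<in>W. v \<noteq> 0\<^sub>v d \<and> (\<forall>M\<in>F'. \<exists>\<alpha>. M *\<^sub>v v = \<alpha> \<cdot>\<^sub>v v)" if "F' \<subseteq> F" for F'
  proof -
    have finF': "finite F'" using finite_subset[OF that finF] .
    show ?thesis using finF' that
    proof (induction F' rule: finite_induct)
      case empty then show ?case using w w0 by auto
    next
      case (insert M F')
      then obtain v where v: "v \<in> W" "v \<noteq> 0\<^sub>v d" and eig: "\<forall>M'\<in>F'. \<exists>\<alpha>. M' *\<^sub>v v = \<alpha> \<cdot>\<^sub>v v" by auto
      have MF: "M \<in> F" using insert by auto
      have Mc: "M \<in> carrier_mat d d" using MF Fc by auto
      have vc: "v \<in> carrier_vec d" using v Wc by auto
      have Mi: "M ^\<^sub>m i \<in> carrier_mat d d" for i using Mc by simp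
      have MiW: "M ^\<^sub>m i *\<^sub>v u \<in> W" if "u \<in> W" for i u
        using that
      proof (induction i arbitrary: u)
        case 0 then show ?case using Mc Wc by auto
      next
        case (Suc i)
        have uc: "u \<in> carrier_vec d" using Suc Wc by auto
        have "M ^\<^sub>m Suc i *\<^sub>v u = M ^\<^sub>m i *\<^sub>v (M *\<^sub>v u)"
          using assoc_mult_mat_vec[OF Mi[of i] Mc uc] by simp
        then show ?case using Suc MW MF by auto
      qed
      define \<omega> where "\<omega> = cis (2 * pi / N)"
      define X where "X i = M ^\<^sub>m i *\<^sub>v v" for i
      have Xc: "X i \<in> carrier_vec d" for i using Mi[of i] vc X_def by simp
      have X0: "X 0 = v" using Mc vc by (simp add: X_def)
      have XN: "X N = v" using ord MF vc by (simp add: X_def)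
      have MX: "M *\<^sub>v X i = X (Suc i)" for i
      proof -
        have "M *\<^sub>v X i = (M * M ^\<^sub>m i) *\<^sub>v v" using assoc_mult_mat_vec[OF Mc Mi[of i] vc] by (simp add: X_def)
        also have "M * M ^\<^sub>m i = M ^\<^sub>m i * M" by (rule pow_mat_commute[OF Mc Mc refl])
        also have "(M ^\<^sub>m i * M) *\<^sub>v v = X (Suc i)" by (simp add: X_def)
        finally show ?thesis .
      qed
      define u where "u s = vec d (\<lambda>r. \<Sum>i<N. (\<omega> ^ s) ^ i * X i $ r)" for s
      have uc: "u s \<in> carrier_vec d" for s by (simp add: u_def)
      have uW: "u s \<in> W" for s
        unfolding u_def by (rule W_lincomb[OF Wc add sm w]) (auto simp: X_def MiW v)
      have lin: "(A *\<^sub>v u s) $ r = (\<Sum>i<N. (\<omega> ^ s) ^ i * (A *\<^sub>v X i) $ r)"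
        if A: "A \<in> carrier_mat d d" and r: "r < d" for A s r
      proof -
        have "(A *\<^sub>v u s) $ r = (\<Sum>i<N. (A *\<^sub>v vec d (\<lambda>r. (\<omega> ^ s) ^ i * X i $ r)) $ r)"
          unfolding u_def by (rule mat_vec_sum[OF A r])
        also have "\<dots> = (\<Sum>i<N. (\<omega> ^ s) ^ i * (A *\<^sub>v X i) $ r)"
        proof (rule sum.cong[OF refl])
          fix i
          have "vec d (\<lambda>r. (\<omega> ^ s) ^ i * X i $ r) = (\<omega> ^ s) ^ i \<cdot>\<^sub>v X i"
            using Xc[of i] by (intro eq_vecI) auto
          then show "(A *\<^sub>v vec d (\<lambda>r. (\<omega> ^ s) ^ i * X i $ r)) $ r = (\<omega> ^ s) ^ i * (A *\<^sub>v X i) $ r"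
            using mult_mat_vec[OF A Xc[of i]] A r by simp
        qed
        finally show ?thesis .
      qed
      have \<omega>N: "(\<omega> ^ s) ^ N = 1" for s
      proof -
        have "\<omega> ^ N = 1" using N by (simp add: \<omega>_def DeMoivre)
        moreover have "(\<omega> ^ s) ^ N = (\<omega> ^ N) ^ s" by (metis power_mult mult.commute)
        ultimately show ?thesis by simp
      qed
      have \<omega>nz: "\<omega> ^ s \<noteq> 0" for s by (simp add: \<omega>_def)
      have eigM: "M *\<^sub>v u s = inverse (\<omega> ^ s) \<cdot>\<^sub>v u s" for s
      proof (rule eq_vecI)
        fix r assume r: "r < dim_vec (inverse (\<omega> ^ s) \<cdot>\<^sub>v u s)"
        then have r: "r < d" by (simp add: u_def)
        let ?z = "\<omega> ^ s"
        have "?z * (M *\<^sub>v u s) $ r = ?z * (\<Sum>i<N. ?z ^ i * X (Suc i) $ r)"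
          using lin[OF Mc r] MX by simp
        also have "\<dots> = (\<Sum>i<N. ?z ^ Suc i * X (Suc i) $ r)"
          by (simp add: sum_distrib_left mult_ac)
        also have "\<dots> = (\<Sum>i<Suc N. ?z ^ i * X i $ r) - X 0 $ r"
          by (simp only: sum.lessThan_Suc_shift) simp
        also have "\<dots> = (\<Sum>i<N. ?z ^ i * X i $ r)"
          using \<omega>N[of s] X0 XN by simp
        also have "\<dots> = u s $ r" using r by (simp add: u_def)
        finally have "?z * (M *\<^sub>v u s) $ r = u s $ r" .
        then show "(M *\<^sub>v u s) $ r = (inverse (\<omega> ^ s) \<cdot>\<^sub>v u s) $ r"
          using r \<omega>nz[of s] by (simp add: u_def field_simps)
      qed (use Mc in \<open>simp add: u_def\<close>)
      have eigF: "\<exists>\<alpha>. M' *\<^sub>v u s = \<alpha> \<cdot>\<^sub>v u s" if M': "M' \<in> F'" for M' s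
      proof -
        obtain \<alpha> where \<alpha>: "M' *\<^sub>v v = \<alpha> \<cdot>\<^sub>v v" using eig M' by auto
        have M'c: "M' \<in> carrier_mat d d" using M' insert Fc by auto
        have com: "M' * M = M * M'" using comm M' MF insert by auto
        have "M' *\<^sub>v X i = \<alpha> \<cdot>\<^sub>v X i" for i
        proof -
          have "M' *\<^sub>v X i = (M' * M ^\<^sub>m i) *\<^sub>v v" using assoc_mult_mat_vec[OF M'c Mi[of i] vc] by (simp add: X_def)
          also have "M' * M ^\<^sub>m i = M ^\<^sub>m i * M'" by (rule pow_mat_commute[OF M'c Mc com])
          also have "(M ^\<^sub>m i * M') *\<^sub>v v = M ^\<^sub>m i *\<^sub>v (\<alpha> \<cdot>\<^sub>v v)" using assoc_mult_mat_vec[OF Mi[of i] M'c vc] \<alpha> by simp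
          also have "\<dots> = \<alpha> \<cdot>\<^sub>v X i" using mult_mat_vec[OF Mi[of i] vc] by (simp add: X_def)
          finally show ?thesis .
        qed
        then have MX': "(M' *\<^sub>v X i) $ r = \<alpha> * X i $ r" if "r < d" for i r
          using Xc[of i] that by simp
        have "M' *\<^sub>v u s = \<alpha> \<cdot>\<^sub>v u s"
        proof (rule eq_vecI)
          fix r assume "r < dim_vec (\<alpha> \<cdot>\<^sub>v u s)"
          then have r: "r < d" by (simp add: u_def)
          have "(M' *\<^sub>v u s) $ r = (\<Sum>i<N. (\<omega> ^ s) ^ i * (\<alpha> * X i $ r))"
            using lin[OF M'c r] MX'[OF r] by simp
          also have "\<dots> = (\<alpha> \<cdot>\<^sub>v u s) $ r" using r by (simp add: u_def sum_distrib_left mult_ac)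
          finally show "(M' *\<^sub>v u s) $ r = (\<alpha> \<cdot>\<^sub>v u s) $ r" .
        qed (use M'c in \<open>simp add: u_def\<close>)
        then show ?thesis by blast
      qed
      have "\<exists>s<N. u s \<noteq> 0\<^sub>v d"
      proof (rule ccontr)
        assume "\<not> (\<exists>s<N. u s \<noteq> 0\<^sub>v d)"
        then have all0: "\<forall>s<N. u s = 0\<^sub>v d" by auto
        obtain r where r: "r < d" "v $ r \<noteq> 0" using nonzero_vec_entry[OF vc v(2)] by auto
        have "0 = (\<Sum>s<N. u s $ r)" using all0 r by simp
        also have "\<dots> = (\<Sum>s<N. \<Sum>i<N. (\<omega> ^ i) ^ s * X i $ r)"
          proof (rule sum.cong[OF refl])
          fix s
          have pc: "(\<omega> ^ s) ^ i = (\<omega> ^ i) ^ s" for i by (metis power_mult mult.commute)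
          show "u s $ r = (\<Sum>i<N. (\<omega> ^ i) ^ s * X i $ r)" using r by (simp add: u_def pc)
        qed
        also have "\<dots> = (\<Sum>i<N. (\<Sum>s<N. (\<omega> ^ i) ^ s) * X i $ r)"
          by (subst sum.swap) (simp add: sum_distrib_right)
        also have "\<dots> = (\<Sum>i<N. (if i = 0 then of_nat N * X 0 $ r else 0))"
          by (rule sum.cong[OF refl]) (simp add: \<omega>_def root_unity_sum[OF N])
        also have "\<dots> = of_nat N * v $ r" using N X0 by (simp add: sum.delta)
        finally show False using N r by simp
      qed
      then obtain s where "u s \<noteq> 0\<^sub>v d" by auto
      then show ?case using uW[of s] eigM[of s] eigF by (intro bexI[of _ "u s"]) auto
    qed
  qed
  then show ?thesis by blast
qed


definition mk :: "nat \<Rightarrow> (nat \<Rightarrow> 'a) \<Rightarrow> (nat \<Rightarrow> 'a) \<Rightarrow> 'a \<Rightarrow> 'a::comm_ring_1 mat" where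
  "mk k x y z = mat (k+2) (k+2) (\<lambda>(i,j). if i = j then 1 else if i = 0 \<and> j = k+1 then z
      else if i = 0 \<and> 1 \<le> j \<and> j \<le> k then x j else if j = k+1 \<and> 1 \<le> i \<and> i \<le> k then y i else 0)"

definition dotp :: "nat \<Rightarrow> (nat \<Rightarrow> 'a) \<Rightarrow> (nat \<Rightarrow> 'a) \<Rightarrow> 'a::comm_ring_1" where
  "dotp k x y = (\<Sum>j\<in>{1..k}. x j * y j)"

lemma mk_carrier[simp]: "mk k x y z \<in> carrier_mat (k+2) (k+2)"
  by (simp add: mk_def)

lemma mk_dim[simp]: "dim_row (mk k x y z) = k+2" "dim_col (mk k x y z) = k+2"
  by (simp_all add: mk_def)

lemma mk_index:
  "i < k+2 \<Longrightarrow> j < k+2 \<Longrightarrow> mk k x y z $$ (i,j) = (if i = j then 1 else if i = 0 \<and> j = k+1 then z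
      else if i = 0 \<and> 1 \<le> j \<and> j \<le> k then x j else if j = k+1 \<and> 1 \<le> i \<and> i \<le> k then y i else 0)"
  by (simp add: mk_def)

lemma sum_split3:
  fixes f :: "nat \<Rightarrow> 'a::comm_monoid_add"
  shows "(\<Sum>l<k+2. f l) = f 0 + (\<Sum>l\<in>{1..k}. f l) + f (k+1)"
proof -
  have "{..<k+2} = insert 0 (insert (k+1) {1..k})" by auto
  then show ?thesis by (simp add: add_ac)
qed

lemma mk_mult:
  "mk k x y z * mk k x' y' z' = mk k (\<lambda>j. x j + x' j) (\<lambda>i. y i + y' i) (z + z' + dotp k x y')"
proof (rule eq_matI)
  fix i j assume "i < dim_row (mk k (\<lambda>j. x j + x' j) (\<lambda>i. y i + y' i) (z + z' + dotp k x y'))"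
    and "j < dim_col (mk k (\<lambda>j. x j + x' j) (\<lambda>i. y i + y' i) (z + z' + dotp k x y'))"
  then have i: "i < k+2" and j: "j < k+2" by auto
  let ?A = "mk k x y z" and ?B = "mk k x' y' z'"
  have "(?A * ?B) $$ (i,j) = (\<Sum>l<k+2. ?A $$ (i,l) * ?B $$ (l,j))"
    by (rule mat_mult_entry[OF mk_carrier mk_carrier i j])
  also have "\<dots> = ?A $$ (i,0) * ?B $$ (0,j) + (\<Sum>l\<in>{1..k}. ?A $$ (i,l) * ?B $$ (l,j)) + ?A $$ (i,k+1) * ?B $$ (k+1,j)"
    by (rule sum_split3)
  also have "(\<Sum>l\<in>{1..k}. ?A $$ (i,l) * ?B $$ (l,j)) =
     (\<Sum>l\<in>{1..k}. (if i = l then 1 else if i = 0 then x l else 0) * (if l = j then 1 else if j = k+1 then y' l else 0))"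
    by (rule sum.cong[OF refl]) (use i j in \<open>auto simp: mk_index\<close>)
  also have "\<dots> = (if i = 0 then (if 1 \<le> j \<and> j \<le> k then x j else if j = k+1 then dotp k x y' else 0)
      else if i \<le> k then (if i = j then 1 else if j = k+1 then y' i else 0) else 0)"
  proof (cases "i = 0")
    case True
    show ?thesis
    proof (cases "j = k+1")
      case True
      then show ?thesis using \<open>i = 0\<close> by (simp add: dotp_def)
    next
      case False
      have "(\<Sum>l\<in>{1..k}. (if i = l then 1 else if i = 0 then x l else 0) * (if l = j then 1 else if j = k+1 then y' l else 0))
          = (\<Sum>l\<in>{1..k}. if l = j then x l else 0)"
        by (rule sum.cong[OF refl]) (use \<open>i = 0\<close> False in auto)
      also have "\<dots> = (if j \<in> {1..k} then x j else 0)" by (simp add: sum.delta')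
      finally show ?thesis using \<open>i = 0\<close> False by auto
    qed
  next
    case False
    show ?thesis
    proof (cases "i \<le> k")
      case True
      have "(\<Sum>l\<in>{1..k}. (if i = l then 1 else if i = 0 then x l else 0) * (if l = j then 1 else if j = k+1 then y' l else 0))
          = (\<Sum>l\<in>{1..k}. if i = l then (if l = j then 1 else if j = k+1 then y' l else 0) else 0)"
        by (rule sum.cong[OF refl]) (use False in auto)
      also have "\<dots> = (if i = j then 1 else if j = k+1 then y' i else 0)"
        using True False by (simp add: sum.delta)
      finally show ?thesis using True False by auto
    next
      case False2: False
      have "(\<Sum>l\<in>{1..k}. (if i = l then 1 else if i = 0 then x l else 0) * (if l = j then 1 else if j = k+1 then y' l else 0)) = 0"
        by (rule sum.neutral) (use False False2 in auto)
      then show ?thesis using False False2 by auto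
    qed
  qed
  finally show "(?A * ?B) $$ (i,j) = mk k (\<lambda>j. x j + x' j) (\<lambda>i. y i + y' i) (z + z' + dotp k x y') $$ (i,j)"
    using i j by (auto simp: mk_index)
qed auto






lemma mk_Hei: "mk k x y z \<in> Hei_set k"
  unfolding Hei_set_def U_carrier by (auto simp: mk_index)

lemma Hei_carrier: "A \<in> Hei_set k \<Longrightarrow> A \<in> carrier_mat (k+2) (k+2)"
  unfolding Hei_set_def U_carrier by auto

lemma Hei_mk:
  assumes A: "A \<in> Hei_set k"
  shows "A = mk k (\<lambda>j. A $$ (0,j)) (\<lambda>i. A $$ (i,k+1)) (A $$ (0,k+1))"
proof (rule eq_matI)
  have Ac: "A \<in> carrier_mat (k+2) (k+2)" and dg: "\<forall>i<k+2. A $$ (i,i) = 1"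
    and lw: "\<forall>i<k+2. \<forall>j<i. A $$ (i,j) = 0"
    and md: "\<forall>i j. 1 \<le> i \<and> i < j \<and> j \<le> k \<longrightarrow> A $$ (i,j) = 0"
    using A unfolding Hei_set_def U_carrier by auto
  fix i j assume "i < dim_row (mk k (\<lambda>j. A $$ (0,j)) (\<lambda>i. A $$ (i,k+1)) (A $$ (0,k+1)))"
    "j < dim_col (mk k (\<lambda>j. A $$ (0,j)) (\<lambda>i. A $$ (i,k+1)) (A $$ (0,k+1)))"
  then have i: "i < k+2" and j: "j < k+2" by auto
  show "A $$ (i,j) = mk k (\<lambda>j. A $$ (0,j)) (\<lambda>i. A $$ (i,k+1)) (A $$ (0,k+1)) $$ (i,j)"
  proof (cases "i = j")
    case True then show ?thesis using dg i j by (simp add: mk_index)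
  next
    case False
    show ?thesis
    proof (cases "j < i")
      case True
      have "A $$ (i,j) = 0" using lw i True by blast
      then show ?thesis using i j True by (simp add: mk_index)
    next
      case False2: False
      then have ij: "i < j" using False by auto
      show ?thesis
      proof (cases "i = 0")
        case True then show ?thesis using i j ij by (simp add: mk_index)
      next
        case False3: False
        show ?thesis
        proof (cases "j = k+1")
          case True then show ?thesis using i j ij False3 by (simp add: mk_index)
        next
          case False4: False
          then have "A $$ (i,j) = 0" using md ij False3 j by auto
          then show ?thesis using i j ij False3 False4 by (simp add: mk_index)
        qed
      qed
    qed
  qed
qed (simp_all add: carrier_matD[OF Hei_carrier[OF assms]])

lemma mk_cong:
  assumes "\<forall>j\<in>{1..k}. x j = x' j" "\<forall>i\<in>{1..k}. y i = y' i"
  shows "mk k x y z = mk k x' y' z"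
  by (rule eq_matI) (use assms in \<open>auto simp: mk_index\<close>)

lemma mk_one: "mk k (\<lambda>_. 0) (\<lambda>_. 0) 0 = 1\<^sub>m (k+2)"
  by (rule eq_matI) (auto simp: mk_index)

lemma mk_corner: "mk k x y z $$ (0,k+1) = z"
  by (simp add: mk_index)

lemma dotp_zero[simp]: "dotp k (\<lambda>_. 0) y = 0" "dotp k x (\<lambda>_. 0) = 0"
  by (simp_all add: dotp_def)

lemma smult_vec_cancel:
  fixes v :: "complex vec"
  assumes "v \<in> carrier_vec d" "v \<noteq> 0\<^sub>v d" "\<alpha> \<cdot>\<^sub>v v = \<beta> \<cdot>\<^sub>v v"
  shows "\<alpha> = \<beta>"
proof -
  obtain r where r: "r < d" "v $ r \<noteq> 0" using nonzero_vec_entry[OF assms(1,2)] by auto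
  have "\<alpha> * v $ r = \<beta> * v $ r" using arg_cong[OF assms(3), of "\<lambda>u. u $ r"] r assms(1) by simp
  then show ?thesis using r by simp
qed



lemma char_exists:
  assumes fin: "finite (UNIV :: 'a set)"
  shows "\<exists>N>0. (of_nat N :: 'a::comm_ring_1) = 0"
proof -
  have "\<not> inj (of_nat :: nat \<Rightarrow> 'a)"
  proof
    assume inj: "inj (of_nat :: nat \<Rightarrow> 'a)"
    have "finite (range (of_nat :: nat \<Rightarrow> 'a))" by (rule finite_subset[OF subset_UNIV fin])
    then have "finite (UNIV :: nat set)" using inj by (rule finite_imageD)
    then show False by simp
  qed
  then obtain i j where ij: "(of_nat i :: 'a) = of_nat j" "i \<noteq> j" unfolding inj_def by blast
  have "\<exists>a b. a < b \<and> (of_nat a :: 'a) = of_nat b"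
  proof (cases "i < j")
    case True then show ?thesis using ij by blast
  next
    case False then have "j < i" using ij(2) by simp
    then show ?thesis using ij(1) by (intro exI[of _ j] exI[of _ i]) simp
  qed
  then obtain a b where ab: "a < b" "(of_nat a :: 'a) = of_nat b" by blast
  have "(of_nat (b - a) :: 'a) = of_nat b - of_nat a" using ab(1) by (simp add: of_nat_diff)
  also have "\<dots> = 0" using ab(2) by simp
  finally show ?thesis using ab(1) by (intro exI[of _ "b - a"]) simp
qed




lemma invertible_inverse:
  fixes P :: "'b::comm_ring_1 mat"
  assumes P: "P \<in> carrier_mat d d" and inv: "invertible_mat P"
  shows "\<exists>Q\<in>carrier_mat d d. P * Q = 1\<^sub>m d \<and> Q * P = 1\<^sub>m d"
proof -
  obtain Q where Q: "P * Q = 1\<^sub>m (dim_row P)" "Q * P = 1\<^sub>m (dim_row Q)"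
    using inv unfolding invertible_mat_def inverts_mat_def by blast
  have dr: "dim_row P = d" "dim_col P = d" using P by auto
  have "dim_col (P * Q) = d" using Q(1) dr by simp
  then have dcQ: "dim_col Q = d" by simp
  have "dim_col (Q * P) = dim_row Q" using Q(2) by simp
  then have drQ: "dim_row Q = d" using dr by simp
  have 1: "P * Q = 1\<^sub>m d" using Q(1) unfolding dr(1) .
  have 2: "Q * P = 1\<^sub>m d" using Q(2) unfolding drQ .
  have 3: "Q \<in> carrier_mat d d" by (rule carrier_matI[OF drQ dcQ])
  show ?thesis using 1 2 3 by blast
qed


lemma card_le_dim_coords:
  fixes V :: "complex vec set"
  assumes VC: "V \<subseteq> carrier_vec d" and finV: "finite V"
  and ind: "\<And>c. (\<forall>r<d. (\<Sum>v\<in>V. c v * v $ r) = 0) \<Longrightarrow> \<forall>v\<in>V. c v = 0"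
  shows "card V \<le> d"
proof -
  interpret vec_space "TYPE(complex)" d .
  have "lin_indpt V"
  proof
    assume "lin_dep V"
    then obtain A a v where A: "finite A" "A \<subseteq> V" "lincomb a A = 0\<^sub>v d" "v \<in> A" "a v \<noteq> 0"
      unfolding lin_dep_def by auto
    define c where "c = (\<lambda>x. if x \<in> A then a x else 0)"
    have "\<forall>r<d. (\<Sum>x\<in>V. c x * x $ r) = 0"
    proof (intro allI impI)
      fix r assume r: "r < d"
      have "(\<Sum>x\<in>V. c x * x $ r) = (\<Sum>x\<in>A. c x * x $ r)"
        by (rule sum.mono_neutral_right) (use A finV in \<open>auto simp: c_def\<close>)
      also have "\<dots> = (\<Sum>x\<in>A. a x * x $ r)" by (rule sum.cong) (auto simp: c_def)
      also have "\<dots> = lincomb a A $ r" using lincomb_index[OF r, of A a] A VC by auto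
      finally show "(\<Sum>x\<in>V. c x * x $ r) = 0" using A r by simp
    qed
    from ind[OF this] A show False unfolding c_def by (metis subsetD)
  qed
  from li_le_dim(2)[OF fin_dim _ this] VC show ?thesis using dim_is_n by simp
qed


locale heis_rep =
  fixes k d :: nat and \<rho> :: "'a::comm_ring_1 mat \<Rightarrow> complex mat"
  assumes finU: "finite (UNIV :: 'a set)"
    and rep: "faithful_rep (Hei_group k :: 'a mat monoid) d \<rho>"
begin

definition Aset :: "'a mat set" where "Aset = {mk k (\<lambda>_. 0) y c | y c. True}"

lemma Hei_group_carrier: "carrier (Hei_group k :: 'a mat monoid) = Hei_set k"
  by (simp add: Hei_group_def)

lemma rho_c: "a \<in> Hei_set k \<Longrightarrow> \<rho> a \<in> carrier_mat d d"
  using rep unfolding faithful_rep_def hom_def GL_mat_def Hei_group_def by auto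

lemma rho_inv: "a \<in> Hei_set k \<Longrightarrow> invertible_mat (\<rho> a)"
  using rep unfolding faithful_rep_def hom_def GL_mat_def Hei_group_def by auto

lemma rho_mult: "a \<in> Hei_set k \<Longrightarrow> b \<in> Hei_set k \<Longrightarrow> \<rho> (a * b) = \<rho> a * \<rho> b"
  using rep unfolding faithful_rep_def hom_def GL_mat_def Hei_group_def U_mat_def by auto

lemma rho_inj: "inj_on \<rho> (Hei_set k)"
  using rep unfolding faithful_rep_def Hei_group_def by auto

lemma one_Hei: "1\<^sub>m (k+2) \<in> Hei_set k"
  using mk_Hei[of k "\<lambda>_. 0" "\<lambda>_. 0" 0] unfolding mk_one .

lemma rho_one: "\<rho> (1\<^sub>m (k+2)) = 1\<^sub>m d"
proof -
  define P where "P = \<rho> (1\<^sub>m (k+2))"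
  have Pc: "P \<in> carrier_mat d d" unfolding P_def by (rule rho_c[OF one_Hei])
  have PP: "P * P = P"
  proof -
    have "\<rho> (1\<^sub>m (k+2) * 1\<^sub>m (k+2)) = P * P" unfolding P_def by (rule rho_mult[OF one_Hei one_Hei])
    moreover have "(1\<^sub>m (k+2) :: 'a mat) * 1\<^sub>m (k+2) = 1\<^sub>m (k+2)" by (rule left_mult_one_mat[OF one_carrier_mat])
    ultimately show ?thesis unfolding P_def by simp
  qed
  obtain Q where Qc: "Q \<in> carrier_mat d d" and PQ: "P * Q = 1\<^sub>m d"
    using invertible_inverse[OF Pc rho_inv[OF one_Hei, folded P_def]] by blast
  have "P = P * (P * Q)" unfolding PQ by (rule right_mult_one_mat[OF Pc, symmetric])
  also have "\<dots> = (P * P) * Q" by (rule assoc_mult_mat[OF Pc Pc Qc, symmetric])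
  also have "\<dots> = 1\<^sub>m d" unfolding PP by (rule PQ)
  finally show ?thesis unfolding P_def .
qed

lemma Aset_Hei: "Aset \<subseteq> Hei_set k"
  unfolding Aset_def using mk_Hei by blast

lemma A_mult: "mk k (\<lambda>_. 0) y c * mk k (\<lambda>_. 0) y' c' = mk k (\<lambda>_. 0) (\<lambda>i. y i + y' i) (c + c')"
proof -
  have "mk k (\<lambda>_. 0) y c * mk k (\<lambda>_. 0) y' c' = mk k (\<lambda>j. 0 + 0) (\<lambda>i. y i + y' i) (c + c' + dotp k (\<lambda>_. 0) y')"
    by (rule mk_mult)
  also have "\<dots> = mk k (\<lambda>_. 0) (\<lambda>i. y i + y' i) (c + c')" by simp
  finally show ?thesis .
qed

lemma A_comm: "a \<in> Aset \<Longrightarrow> b \<in> Aset \<Longrightarrow> a * b = b * a"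
  unfolding Aset_def by (auto simp: A_mult add.commute)

lemma A_closed: "a \<in> Aset \<Longrightarrow> b \<in> Aset \<Longrightarrow> a * b \<in> Aset"
  unfolding Aset_def using A_mult by blast

lemma one_A: "1\<^sub>m (k+2) \<in> Aset"
  unfolding Aset_def mk_one[symmetric] by blast

lemma rho_cancel:
  assumes a: "a \<in> Hei_set k" and v: "v \<in> carrier_vec d" and z: "\<rho> a *\<^sub>v v = 0\<^sub>v d"
  shows "v = 0\<^sub>v d"
proof -
  obtain Q where Qc: "Q \<in> carrier_mat d d" and QP: "Q * \<rho> a = 1\<^sub>m d"
    using invertible_inverse[OF rho_c[OF a] rho_inv[OF a]] by blast
  have "v = (Q * \<rho> a) *\<^sub>v v" unfolding QP by (rule one_mult_mat_vec[OF v, symmetric])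
  also have "\<dots> = Q *\<^sub>v (\<rho> a *\<^sub>v v)" by (rule assoc_mult_mat_vec[OF Qc rho_c[OF a] v])
  also have "\<dots> = 0\<^sub>v d" unfolding z using Qc by (intro eq_vecI) (simp_all add: scalar_prod_def)
  finally show ?thesis .
qed

definition Lam :: "('a mat \<Rightarrow> complex) set" where
  "Lam = {\<xi>. \<exists>v. v \<in> carrier_vec d \<and> v \<noteq> 0\<^sub>v d \<and> (\<forall>a\<in>Aset. \<rho> a *\<^sub>v v = \<xi> a \<cdot>\<^sub>v v) \<and> (\<forall>a. a \<notin> Aset \<longrightarrow> \<xi> a = 0)}"

definition vv :: "('a mat \<Rightarrow> complex) \<Rightarrow> complex vec" where
  "vv \<xi> = (SOME v. v \<in> carrier_vec d \<and> v \<noteq> 0\<^sub>v d \<and> (\<forall>a\<in>Aset. \<rho> a *\<^sub>v v = \<xi> a \<cdot>\<^sub>v v))"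

lemma vv:
  assumes "\<xi> \<in> Lam"
  shows "vv \<xi> \<in> carrier_vec d" "vv \<xi> \<noteq> 0\<^sub>v d" "\<forall>a\<in>Aset. \<rho> a *\<^sub>v vv \<xi> = \<xi> a \<cdot>\<^sub>v vv \<xi>"
proof -
  have ex: "\<exists>v. v \<in> carrier_vec d \<and> v \<noteq> 0\<^sub>v d \<and> (\<forall>a\<in>Aset. \<rho> a *\<^sub>v v = \<xi> a \<cdot>\<^sub>v v)"
    using assms unfolding Lam_def by blast
  show "vv \<xi> \<in> carrier_vec d" "vv \<xi> \<noteq> 0\<^sub>v d" "\<forall>a\<in>Aset. \<rho> a *\<^sub>v vv \<xi> = \<xi> a \<cdot>\<^sub>v vv \<xi>"
    using someI_ex[OF ex] unfolding vv_def by blast+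
qed

lemma Lam_out: "\<xi> \<in> Lam \<Longrightarrow> a \<notin> Aset \<Longrightarrow> \<xi> a = 0"
  unfolding Lam_def by blast

lemma Lam_mult:
  assumes l: "\<xi> \<in> Lam" and a: "a \<in> Aset" and b: "b \<in> Aset"
  shows "\<xi> (a * b) = \<xi> a * \<xi> b"
proof -
  let ?v = "vv \<xi>"
  have v: "?v \<in> carrier_vec d" "?v \<noteq> 0\<^sub>v d" and eig: "\<forall>a\<in>Aset. \<rho> a *\<^sub>v ?v = \<xi> a \<cdot>\<^sub>v ?v"
    using vv[OF l] by auto
  have aH: "a \<in> Hei_set k" and bH: "b \<in> Hei_set k" using a b Aset_Hei by auto
  have "\<xi> (a * b) \<cdot>\<^sub>v ?v = \<rho> (a * b) *\<^sub>v ?v" using eig A_closed[OF a b] by simp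
  also have "\<dots> = (\<rho> a * \<rho> b) *\<^sub>v ?v" unfolding rho_mult[OF aH bH] ..
  also have "\<dots> = \<rho> a *\<^sub>v (\<rho> b *\<^sub>v ?v)" by (rule assoc_mult_mat_vec[OF rho_c[OF aH] rho_c[OF bH] v(1)])
  also have "\<rho> b *\<^sub>v ?v = \<xi> b \<cdot>\<^sub>v ?v" using eig b by simp
  also have "\<rho> a *\<^sub>v (\<xi> b \<cdot>\<^sub>v ?v) = \<xi> b \<cdot>\<^sub>v (\<rho> a *\<^sub>v ?v)" by (rule mult_mat_vec[OF rho_c[OF aH] v(1)])
  also have "\<rho> a *\<^sub>v ?v = \<xi> a \<cdot>\<^sub>v ?v" using eig a by simp
  also have "\<xi> b \<cdot>\<^sub>v (\<xi> a \<cdot>\<^sub>v ?v) = (\<xi> a * \<xi> b) \<cdot>\<^sub>v ?v" by (simp add: smult_smult_assoc mult.commute)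
  finally show ?thesis using smult_vec_cancel[OF v] by blast
qed

lemma Lam_nz:
  assumes l: "\<xi> \<in> Lam" and a: "a \<in> Aset"
  shows "\<xi> a \<noteq> 0"
proof
  assume z: "\<xi> a = 0"
  let ?v = "vv \<xi>"
  have v: "?v \<in> carrier_vec d" "?v \<noteq> 0\<^sub>v d" and eig: "\<rho> a *\<^sub>v ?v = \<xi> a \<cdot>\<^sub>v ?v"
    using vv[OF l] a by auto
  have "\<rho> a *\<^sub>v ?v = 0\<^sub>v d" unfolding eig z using v(1) by (intro eq_vecI) simp_all
  then have "?v = 0\<^sub>v d" using rho_cancel[OF _ v(1)] a Aset_Hei by blast
  then show False using v(2) by simp
qed

lemma Lam_one:
  assumes l: "\<xi> \<in> Lam"
  shows "\<xi> (1\<^sub>m (k+2)) = 1"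
proof -
  let ?v = "vv \<xi>"
  have v: "?v \<in> carrier_vec d" "?v \<noteq> 0\<^sub>v d" and eig: "\<rho> (1\<^sub>m (k+2)) *\<^sub>v ?v = \<xi> (1\<^sub>m (k+2)) \<cdot>\<^sub>v ?v"
    using vv[OF l] one_A by auto
  have "\<xi> (1\<^sub>m (k+2)) \<cdot>\<^sub>v ?v = \<rho> (1\<^sub>m (k+2)) *\<^sub>v ?v" using eig by simp
  also have "\<dots> = ?v" unfolding rho_one by (rule one_mult_mat_vec[OF v(1)])
  also have "\<dots> = 1 \<cdot>\<^sub>v ?v" using v(1) by (intro eq_vecI) simp_all
  finally have "\<xi> (1\<^sub>m (k+2)) \<cdot>\<^sub>v ?v = 1 \<cdot>\<^sub>v ?v" .
  then show ?thesis using smult_vec_cancel[OF v] by blast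
qed

lemma vv_inj: "inj_on vv Lam"
proof
  fix \<xi> \<mu> assume l: "\<xi> \<in> Lam" and m: "\<mu> \<in> Lam" and eq: "vv \<xi> = vv \<mu>"
  show "\<xi> = \<mu>"
  proof
    fix a
    show "\<xi> a = \<mu> a"
    proof (cases "a \<in> Aset")
      case True
      have e1: "\<rho> a *\<^sub>v vv \<xi> = \<xi> a \<cdot>\<^sub>v vv \<xi>" using vv(3)[OF l] True by blast
      have e2: "\<rho> a *\<^sub>v vv \<mu> = \<mu> a \<cdot>\<^sub>v vv \<mu>" using vv(3)[OF m] True by blast
      have "\<xi> a \<cdot>\<^sub>v vv \<xi> = \<mu> a \<cdot>\<^sub>v vv \<xi>" using e1 e2 unfolding eq by simp
      then show ?thesis using smult_vec_cancel[OF vv(1,2)[OF l]] by blast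
    next
      case False then show ?thesis using Lam_out[OF l] Lam_out[OF m] by simp
    qed
  qed
qed

lemma Lam_finite_card_sub:
  assumes S: "S \<subseteq> Lam" and finS: "finite S"
  shows "card S \<le> d"
proof -
  define V where "V = vv ` S"
  have injS: "inj_on vv S" using vv_inj S by (rule inj_on_subset)
  have cardV: "card V = card S" unfolding V_def using card_image[OF injS] .
  have VC: "V \<subseteq> carrier_vec d"
  proof
    fix v assume "v \<in> V"
    then obtain \<xi> where l: "\<xi> \<in> S" and vl: "v = vv \<xi>" unfolding V_def by blast
    show "v \<in> carrier_vec d" unfolding vl by (rule vv(1)) (use l S in blast)
  qed
  have finV: "finite V" unfolding V_def using finS by simp
  define ev where "ev v = inv_into S vv v" for v
  have ev: "ev (vv \<xi>) = \<xi>" if "\<xi> \<in> S" for \<xi> unfolding ev_def using inv_into_f_f[OF injS that] .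
  have ind: "\<forall>v\<in>V. c v = 0" if rel: "\<forall>r<d. (\<Sum>v\<in>V. c v * v $ r) = 0" for c
  proof -
    have nzV: "\<forall>v\<in>V. v \<noteq> 0\<^sub>v d"
    proof
      fix v assume "v \<in> V"
      then obtain \<xi> where l: "\<xi> \<in> S" and vl: "v = vv \<xi>" unfolding V_def by blast
      show "v \<noteq> 0\<^sub>v d" unfolding vl by (rule vv(2)) (use l S in blast)
    qed
    have rC: "\<forall>i\<in>Aset. \<rho> i \<in> carrier_mat d d" using rho_c Aset_Hei by blast
    have eV: "\<forall>v\<in>V. \<forall>i\<in>Aset. \<rho> i *\<^sub>v v = ev v i \<cdot>\<^sub>v v"
    proof (intro ballI)
      fix v i assume v: "v \<in> V" and i: "i \<in> Aset"
      then obtain \<xi> where l: "\<xi> \<in> S" and vl: "v = vv \<xi>" unfolding V_def by blast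
      have "\<xi> \<in> Lam" using l S by blast
      then show "\<rho> i *\<^sub>v v = ev v i \<cdot>\<^sub>v v" unfolding vl ev[OF l] using vv(3) i by blast
    qed
    have dV: "\<forall>v\<in>V. \<forall>w\<in>V. v \<noteq> w \<longrightarrow> (\<exists>i\<in>Aset. ev v i \<noteq> ev w i)"
    proof (intro ballI impI)
      fix v w assume v: "v \<in> V" and w: "w \<in> V" and vw: "v \<noteq> w"
      obtain \<xi> where l: "\<xi> \<in> S" and vl: "v = vv \<xi>" using v unfolding V_def by blast
      obtain \<mu> where m: "\<mu> \<in> S" and wm: "w = vv \<mu>" using w unfolding V_def by blast
      have "\<xi> \<noteq> \<mu>" using vw vl wm by blast
      then obtain a where a: "\<xi> a \<noteq> \<mu> a" by blast
      have "a \<in> Aset"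
      proof (rule ccontr)
        assume "a \<notin> Aset"
        moreover have "\<xi> \<in> Lam" "\<mu> \<in> Lam" using l m S by blast+
        ultimately show False using a Lam_out by metis
      qed
      then show "\<exists>i\<in>Aset. ev v i \<noteq> ev w i" unfolding vl wm ev[OF l] ev[OF m] using a by blast
    qed
    show ?thesis by (rule eig_indep[OF finV VC nzV rC eV dV rel])
  qed
  have "card V \<le> d" by (rule card_le_dim_coords[OF VC finV ind])
  then show ?thesis using cardV by simp
qed

lemma Lam_finite: "finite Lam"
proof (rule ccontr)
  assume "infinite Lam"
  then obtain S where S: "finite S" "card S = Suc d" "S \<subseteq> Lam" using infinite_arbitrarily_large by blast
  have "card S \<le> d" by (rule Lam_finite_card_sub[OF S(3) S(1)])
  then show False using S(2) by simp
qed

lemma Lam_card: "card Lam \<le> d"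
  using Lam_finite_card_sub[OF subset_refl Lam_finite] .

end




lemma mat_vec_unit_entry:
  fixes B :: "'b::comm_ring_1 mat"
  assumes B: "B \<in> carrier_mat d d" and r: "r < d" and j: "j < d"
  shows "(B *\<^sub>v unit_vec d j) $ r = B $$ (r,j)"
proof -
  have "(B *\<^sub>v unit_vec d j) $ r = (\<Sum>l\<in>{0..<d}. B $$ (r,l) * unit_vec d j $ l)"
    using B r by (simp add: scalar_prod_def)
  also have "\<dots> = (\<Sum>l\<in>{0..<d}. if l = j then B $$ (r,l) else 0)"
    by (rule sum.cong[OF refl]) (simp add: unit_vec_def)
  also have "\<dots> = B $$ (r,j)" using j by (simp add: sum.delta')
  finally show ?thesis .
qed

context heis_rep
begin

lemma Am_in: "mk k (\<lambda>_. 0) y c \<in> Aset"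
  unfolding Aset_def by blast

lemma rho_pow: "\<rho> (mk k (\<lambda>_. 0) y c) ^\<^sub>m i = \<rho> (mk k (\<lambda>_. 0) (\<lambda>l. of_nat i * y l) (of_nat i * c))"
proof (induction i)
  case 0
  have "\<rho> (mk k (\<lambda>_. 0) y c) ^\<^sub>m 0 = 1\<^sub>m d" using carrier_matD(1)[OF rho_c[OF mk_Hei]] by simp
  also have "\<dots> = \<rho> (mk k (\<lambda>_. 0) (\<lambda>_. 0) 0)" unfolding mk_one rho_one ..
  finally show ?case by simp
next
  case (Suc i)
  have "\<rho> (mk k (\<lambda>_. 0) y c) ^\<^sub>m Suc i = \<rho> (mk k (\<lambda>_. 0) y c) ^\<^sub>m i * \<rho> (mk k (\<lambda>_. 0) y c)" by simp
  also have "\<dots> = \<rho> (mk k (\<lambda>_. 0) (\<lambda>l. of_nat i * y l) (of_nat i * c)) * \<rho> (mk k (\<lambda>_. 0) y c)"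
    unfolding Suc ..
  also have "\<dots> = \<rho> (mk k (\<lambda>_. 0) (\<lambda>l. of_nat i * y l) (of_nat i * c) * mk k (\<lambda>_. 0) y c)"
    by (rule rho_mult[OF mk_Hei mk_Hei, symmetric])
  also have "mk k (\<lambda>_. 0) (\<lambda>l. of_nat i * y l) (of_nat i * c) * mk k (\<lambda>_. 0) y c =
      mk k (\<lambda>_. 0) (\<lambda>l. of_nat (Suc i) * y l) (of_nat (Suc i) * c)"
    unfolding A_mult by (simp add: algebra_simps)
  finally show ?case .
qed

lemma rho_ord:
  assumes N: "(of_nat N :: 'a) = 0" and a: "a \<in> Aset"
  shows "\<rho> a ^\<^sub>m N = 1\<^sub>m d"
proof -
  obtain y c where a: "a = mk k (\<lambda>_. 0) y c" using a unfolding Aset_def by blast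
  have "\<rho> a ^\<^sub>m N = \<rho> (mk k (\<lambda>_. 0) (\<lambda>l. of_nat N * y l) (of_nat N * c))" unfolding a by (rule rho_pow)
  also have "\<dots> = \<rho> (mk k (\<lambda>_. 0) (\<lambda>_. 0) 0)" using N by simp
  also have "\<dots> = 1\<^sub>m d" unfolding mk_one rho_one ..
  finally show ?thesis .
qed

lemma Aset_finite: "finite Aset"
proof (rule finite_subset[OF _ finite_carrier_mat_fin[OF finU, of "k+2" "k+2"]])
  show "Aset \<subseteq> carrier_mat (k+2) (k+2)" using Aset_Hei Hei_carrier by blast
qed


lemma kernel:
  assumes all: "\<forall>\<xi>\<in>Lam. \<xi> (mk k (\<lambda>_. 0) (\<lambda>_. 0) c) = 1"
  shows "c = 0"
proof (rule ccontr)
  assume c: "c \<noteq> 0"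
  define z where "z = mk k (\<lambda>_. 0) (\<lambda>_. 0) c"
  have zH: "z \<in> Hei_set k" unfolding z_def by (rule mk_Hei)
  have zA: "z \<in> Aset" unfolding z_def by (rule Am_in)
  define M where "M = \<rho> z"
  have Mc: "M \<in> carrier_mat d d" unfolding M_def by (rule rho_c[OF zH])
  define B where "B = M - 1\<^sub>m d"
  have Bc: "B \<in> carrier_mat d d" unfolding B_def by (rule minus_carrier_mat[OF one_carrier_mat])
  obtain N where N: "N > 0" "(of_nat N :: 'a) = 0" using char_exists[OF finU] by blast
  have M1: "M \<noteq> 1\<^sub>m d"
  proof
    assume "M = 1\<^sub>m d"
    then have "\<rho> z = \<rho> (1\<^sub>m (k+2))" unfolding M_def rho_one .
    then have "z = 1\<^sub>m (k+2)" using rho_inj zH one_Hei unfolding inj_on_def by blast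
    then have "z $$ (0,k+1) = (1\<^sub>m (k+2) :: 'a mat) $$ (0,k+1)" by simp
    then have "c = 0" unfolding z_def mk_corner by simp
    then show False using c by simp
  qed
  obtain r j where rj: "r < d" "j < d" "B $$ (r,j) \<noteq> 0"
  proof (rule ccontr)
    assume "\<not> thesis"
    then have B0: "\<forall>r<d. \<forall>j<d. B $$ (r,j) = 0" using that by blast
    have "M = 1\<^sub>m d"
    proof (rule eq_matI)
      fix r j assume r: "r < dim_row (1\<^sub>m d :: complex mat)" and j: "j < dim_col (1\<^sub>m d :: complex mat)"
      have "B $$ (r,j) = M $$ (r,j) - (1\<^sub>m d :: complex mat) $$ (r,j)" unfolding B_def using Mc r j by simp
      then show "M $$ (r,j) = (1\<^sub>m d :: complex mat) $$ (r,j)" using B0 r j by simp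
    qed (use Mc in simp_all)
    then show False using M1 by simp
  qed
  define w where "w = B *\<^sub>v unit_vec d j"
  have w0: "w \<noteq> 0\<^sub>v d"
  proof
    assume w0: "w = 0\<^sub>v d"
    have e: "w $ r = B $$ (r,j)" unfolding w_def by (rule mat_vec_unit_entry[OF Bc rj(1,2)])
    have "w $ r = 0\<^sub>v d $ r" unfolding w0 ..
    also have "\<dots> = 0" by (rule index_zero_vec(1)[OF rj(1)])
    finally show False using e rj(3) by simp
  qed
  define W where "W = {u. \<exists>x\<in>carrier_vec d. u = B *\<^sub>v x}"
  have wW: "w \<in> W" unfolding W_def w_def using unit_vec_carrier[of d j] by blast
  have Wc: "W \<subseteq> carrier_vec d"
  proof
    fix u assume "u \<in> W"
    then obtain x where x: "x \<in> carrier_vec d" "u = B *\<^sub>v x" unfolding W_def by blast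
    show "u \<in> carrier_vec d" unfolding x(2) by (rule mult_mat_vec_carrier[OF Bc x(1)])
  qed
  have Wadd: "\<forall>u\<in>W. \<forall>u'\<in>W. u + u' \<in> W"
  proof (intro ballI)
    fix u u' assume "u \<in> W" "u' \<in> W"
    then obtain x x' where x: "x \<in> carrier_vec d" "u = B *\<^sub>v x" and x': "x' \<in> carrier_vec d" "u' = B *\<^sub>v x'"
      unfolding W_def by blast
    have "u + u' = B *\<^sub>v (x + x')" unfolding x(2) x'(2) by (rule mult_add_distrib_mat_vec[OF Bc x(1) x'(1), symmetric])
    then show "u + u' \<in> W" unfolding W_def using add_carrier_vec[OF x(1) x'(1)] by blast
  qed
  have Wsm: "\<forall>a. \<forall>u\<in>W. a \<cdot>\<^sub>v u \<in> W"
  proof (intro allI ballI)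
    fix a :: complex and u assume "u \<in> W"
    then obtain x where x: "x \<in> carrier_vec d" "u = B *\<^sub>v x" unfolding W_def by blast
    have "a \<cdot>\<^sub>v u = B *\<^sub>v (a \<cdot>\<^sub>v x)" unfolding x(2) by (rule mult_mat_vec[OF Bc x(1), symmetric])
    then show "a \<cdot>\<^sub>v u \<in> W" unfolding W_def using smult_carrier_vec[of a x d] x(1) by blast
  qed
  have comB: "\<rho> a * B = B * \<rho> a" if a: "a \<in> Aset" for a
  proof -
    have aH: "a \<in> Hei_set k" using a Aset_Hei by blast
    have ac: "\<rho> a \<in> carrier_mat d d" by (rule rho_c[OF aH])
    have "\<rho> a * M = M * \<rho> a"
      unfolding M_def rho_mult[OF aH zH, symmetric] rho_mult[OF zH aH, symmetric] A_comm[OF a zA] ..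
    then show ?thesis unfolding B_def
      using mult_minus_distrib_mat[OF ac Mc one_carrier_mat] minus_mult_distrib_mat[OF Mc one_carrier_mat ac] ac
      by simp
  qed
  have WM: "\<forall>M'\<in>\<rho> ` Aset. \<forall>u\<in>W. M' *\<^sub>v u \<in> W"
  proof (intro ballI)
    fix M' u assume M': "M' \<in> \<rho> ` Aset" and u: "u \<in> W"
    then obtain a where a: "a \<in> Aset" "M' = \<rho> a" by blast
    have aH: "a \<in> Hei_set k" using a Aset_Hei by blast
    have ac: "\<rho> a \<in> carrier_mat d d" by (rule rho_c[OF aH])
    obtain x where x: "x \<in> carrier_vec d" "u = B *\<^sub>v x" using u unfolding W_def by blast
    have "M' *\<^sub>v u = (\<rho> a * B) *\<^sub>v x" unfolding a(2) x(2) by (rule assoc_mult_mat_vec[OF ac Bc x(1), symmetric])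
    also have "\<dots> = (B * \<rho> a) *\<^sub>v x" unfolding comB[OF a(1)] ..
    also have "\<dots> = B *\<^sub>v (\<rho> a *\<^sub>v x)" by (rule assoc_mult_mat_vec[OF Bc ac x(1)])
    finally have eq: "M' *\<^sub>v u = B *\<^sub>v (\<rho> a *\<^sub>v x)" .
    have "\<rho> a *\<^sub>v x \<in> carrier_vec d" by (rule mult_mat_vec_carrier[OF ac x(1)])
    then show "M' *\<^sub>v u \<in> W" unfolding W_def eq by blast
  qed
  have Ffin: "finite (\<rho> ` Aset)" using Aset_finite by simp
  have Fc: "\<rho> ` Aset \<subseteq> carrier_mat d d" using rho_c Aset_Hei by blast
  have Fcomm: "\<forall>M\<in>\<rho> ` Aset. \<forall>M'\<in>\<rho> ` Aset. M * M' = M' * M"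
  proof (intro ballI)
    fix M M' assume "M \<in> \<rho> ` Aset" "M' \<in> \<rho> ` Aset"
    then obtain a b where ab: "a \<in> Aset" "b \<in> Aset" "M = \<rho> a" "M' = \<rho> b" by blast
    have aH: "a \<in> Hei_set k" and bH: "b \<in> Hei_set k" using ab Aset_Hei by blast+
    show "M * M' = M' * M" unfolding ab(3,4) rho_mult[OF aH bH, symmetric] rho_mult[OF bH aH, symmetric]
      A_comm[OF ab(1,2)] ..
  qed
  have Ford: "\<forall>M\<in>\<rho> ` Aset. M ^\<^sub>m N = 1\<^sub>m d" using rho_ord[OF N(2)] by blast
  obtain v where v: "v \<in> W" "v \<noteq> 0\<^sub>v d" and eig: "\<forall>M\<in>\<rho> ` Aset. \<exists>\<alpha>. M *\<^sub>v v = \<alpha> \<cdot>\<^sub>v v"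
    using common_eigvec[OF Ffin Fc Fcomm N(1) Ford Wc Wadd Wsm WM wW w0] by blast
  have vc: "v \<in> carrier_vec d" using v Wc by blast
  define \<xi> where "\<xi> a = (if a \<in> Aset then (SOME \<alpha>. \<rho> a *\<^sub>v v = \<alpha> \<cdot>\<^sub>v v) else 0)" for a
  have \<xi>eig: "\<rho> a *\<^sub>v v = \<xi> a \<cdot>\<^sub>v v" if a: "a \<in> Aset" for a
  proof -
    have "\<exists>\<alpha>. \<rho> a *\<^sub>v v = \<alpha> \<cdot>\<^sub>v v" using eig a by blast
    from someI_ex[OF this] show ?thesis unfolding \<xi>_def using a by simp
  qed
  have "\<xi> \<in> Lam" unfolding Lam_def using vc v(2) \<xi>eig by (auto simp: \<xi>_def)
  then have "\<xi> z = 1" using all unfolding z_def by blast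
  then have Mv: "M *\<^sub>v v = v" using \<xi>eig[OF zA] vc unfolding M_def by simp
  obtain x0 where x0: "x0 \<in> carrier_vec d" "v = B *\<^sub>v x0" using v(1) unfolding W_def by blast
  have Mx0: "M *\<^sub>v x0 = x0 + v"
  proof (rule eq_vecI)
    fix r assume r: "r < dim_vec (x0 + v)"
    then have r: "r < d" using vc by simp
    have "v $ r = (M *\<^sub>v x0) $ r - x0 $ r"
      unfolding x0(2) B_def using minus_mult_distrib_mat_vec[OF Mc one_carrier_mat x0(1)] x0 Mc r by simp
    moreover have "(x0 + v) $ r = x0 $ r + v $ r" using r vc by simp
    ultimately show "(M *\<^sub>v x0) $ r = (x0 + v) $ r" by simp
  qed (use Mc vc in simp)
  have Miv: "M ^\<^sub>m i *\<^sub>v v = v" for i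
  proof (induction i)
    case 0 then show ?case using Mc vc by simp
  next
    case (Suc i)
    have "M ^\<^sub>m Suc i *\<^sub>v v = M ^\<^sub>m i *\<^sub>v (M *\<^sub>v v)"
      using assoc_mult_mat_vec[OF pow_carrier_mat[OF Mc] Mc vc] by simp
    then show ?case unfolding Mv Suc .
  qed
  have Mix: "M ^\<^sub>m i *\<^sub>v x0 = x0 + of_nat i \<cdot>\<^sub>v v" for i
  proof (induction i)
    case 0 then show ?case using Mc vc x0(1) by (intro eq_vecI) simp_all
  next
    case (Suc i)
    have "M ^\<^sub>m Suc i *\<^sub>v x0 = M ^\<^sub>m i *\<^sub>v (M *\<^sub>v x0)"
      using assoc_mult_mat_vec[OF pow_carrier_mat[OF Mc] Mc x0(1)] by simp
    also have "\<dots> = M ^\<^sub>m i *\<^sub>v x0 + M ^\<^sub>m i *\<^sub>v v"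
      unfolding Mx0 by (rule mult_add_distrib_mat_vec[OF pow_carrier_mat[OF Mc] x0(1) vc])
    also have "\<dots> = x0 + of_nat (Suc i) \<cdot>\<^sub>v v"
      unfolding Suc Miv using x0(1) vc by (intro eq_vecI) (simp_all add: algebra_simps)
    finally show ?case .
  qed
  have "M ^\<^sub>m N = 1\<^sub>m d" unfolding M_def by (rule rho_ord[OF N(2) zA])
  then have "x0 = x0 + of_nat N \<cdot>\<^sub>v v" using Mix[of N] x0(1) by simp
  then have "\<forall>r<d. v $ r = 0"
  proof (intro allI impI)
    fix r assume r: "r < d"
    assume eq: "x0 = x0 + of_nat N \<cdot>\<^sub>v v"
    have "x0 $ r = x0 $ r + of_nat N * v $ r"
      using arg_cong[OF eq, of "\<lambda>u. u $ r"] r vc by simp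
    then show "v $ r = 0" using N(1) by simp
  qed
  then show False using nonzero_vec_entry[OF vc v(2)] by blast
qed

end




lemma sum_split0:
  fixes f :: "nat \<Rightarrow> 'b::comm_monoid_add"
  shows "(\<Sum>i<k+1. f i) = f 0 + (\<Sum>i\<in>{1..k}. f i)"
proof -
  have "{..<k+1} = insert 0 {1..k}" by auto
  then show ?thesis by simp
qed

lemma mk_col_sum:
  "(\<Sum>i<k+1. w i * mk k x y c $$ (i,k+1)) = w 0 * c + (\<Sum>i\<in>{1..k}. w i * y i)"
proof -
  have "(\<Sum>i<k+1. w i * mk k x y c $$ (i,k+1)) = w 0 * mk k x y c $$ (0,k+1) + (\<Sum>i\<in>{1..k}. w i * mk k x y c $$ (i,k+1))"
    by (rule sum_split0)
  also have "(\<Sum>i\<in>{1..k}. w i * mk k x y c $$ (i,k+1)) = (\<Sum>i\<in>{1..k}. w i * y i)"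
    by (rule sum.cong[OF refl]) (simp add: mk_index)
  finally show ?thesis unfolding mk_corner .
qed

context heis_rep
begin

abbreviation Zm :: "'a \<Rightarrow> 'a mat" where "Zm c \<equiv> mk k (\<lambda>_. 0) (\<lambda>_. 0) c"

lemma Zm_add: "Zm (a + b) = Zm a * Zm b"
  unfolding A_mult by simp

definition Wset :: "(nat \<Rightarrow> 'a) set" where "Wset = {w. w 0 = 1 \<and> (\<forall>i>k. w i = 0)}"

definition cls :: "('a mat \<Rightarrow> complex) \<Rightarrow> (nat \<Rightarrow> 'a) \<Rightarrow> (nat \<Rightarrow> 'a) \<Rightarrow> complex" where
  "cls \<xi> w = (\<lambda>v. \<xi> (Zm (\<Sum>i<k+1. w i * v i)))"

definition Tset :: "((nat \<Rightarrow> 'a) \<Rightarrow> complex) set" where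
  "Tset = {cls \<xi> w | \<xi> w. \<xi> \<in> Lam \<and> w \<in> Wset}"

lemma Wset_finite: "finite Wset"
proof (rule finite_subset)
  show "Wset \<subseteq> {w. \<forall>x. (x \<in> {..k} \<longrightarrow> w x \<in> UNIV) \<and> (x \<notin> {..k} \<longrightarrow> w x = 0)}"
    unfolding Wset_def by auto
  show "finite {w :: nat \<Rightarrow> 'a. \<forall>x. (x \<in> {..k} \<longrightarrow> w x \<in> UNIV) \<and> (x \<notin> {..k} \<longrightarrow> w x = 0)}"
    by (rule finite_set_of_finite_funs) (simp_all add: finU)
qed

lemma Tset_finite: "finite Tset"
proof -
  have "Tset = (\<lambda>(\<xi>, w). cls \<xi> w) ` (Lam \<times> Wset)" unfolding Tset_def by auto
  then show ?thesis using Lam_finite Wset_finite by simp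
qed

lemma cls_mult:
  assumes l: "\<xi> \<in> Lam"
  shows "cls \<xi> w (\<lambda>i. u i + u' i) = cls \<xi> w u * cls \<xi> w u'"
proof -
  have "(\<Sum>i<k+1. w i * (u i + u' i)) = (\<Sum>i<k+1. w i * u i) + (\<Sum>i<k+1. w i * u' i)"
    by (simp add: distrib_left sum.distrib)
  then have "cls \<xi> w (\<lambda>i. u i + u' i) = \<xi> (Zm (\<Sum>i<k+1. w i * u i) * Zm (\<Sum>i<k+1. w i * u' i))"
    unfolding cls_def Zm_add[symmetric] by simp
  also have "\<dots> = cls \<xi> w u * cls \<xi> w u'" unfolding cls_def by (rule Lam_mult[OF l Am_in Am_in])
  finally show ?thesis .
qed

lemma cls_local:
  assumes "\<forall>i<k+1. u i = u' i"
  shows "cls \<xi> w u = cls \<xi> w u'"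
proof -
  have "(\<Sum>i<k+1. w i * u i) = (\<Sum>i<k+1. w i * u' i)" using assms by (intro sum.cong) auto
  then show ?thesis unfolding cls_def by simp
qed

lemma cls_nz: "\<xi> \<in> Lam \<Longrightarrow> cls \<xi> w u \<noteq> 0"
  unfolding cls_def by (rule Lam_nz[OF _ Am_in])

lemma cls_zero:
  assumes l: "\<xi> \<in> Lam"
  shows "cls \<xi> w (\<lambda>_. 0) = 1"
  unfolding cls_def using Lam_one[OF l] by (simp add: mk_one)

lemma cls_chi:
  assumes w: "w \<in> Wset"
  shows "cls \<xi> w (\<lambda>i. if i = 0 then c else 0) = \<xi> (Zm c)"
proof -
  have "(\<Sum>i<k+1. w i * (if i = 0 then c else 0)) = w 0 * c + (\<Sum>i\<in>{1..k}. w i * (if i = 0 then c else 0))"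
    using sum_split0[of "\<lambda>i. w i * (if i = 0 then c else 0)" k] by simp
  also have "\<dots> = c" using w unfolding Wset_def by simp
  finally show ?thesis unfolding cls_def by simp
qed


definition chi_of :: "((nat \<Rightarrow> 'a) \<Rightarrow> complex) \<Rightarrow> 'a \<Rightarrow> complex" where
  "chi_of \<psi> c = \<psi> (\<lambda>i. if i = 0 then c else 0)"

definition L0 :: "('a \<Rightarrow> complex) \<Rightarrow> ('a mat \<Rightarrow> complex)" where
  "L0 \<chi> = (SOME \<xi>. \<xi> \<in> Lam \<and> (\<forall>c. \<xi> (Zm c) = \<chi> c))"

definition colK :: "'a mat \<Rightarrow> nat \<Rightarrow> 'a" where "colK a = (\<lambda>i. a $$ (i,k+1))"

definition mu :: "((nat \<Rightarrow> 'a) \<Rightarrow> complex) \<Rightarrow> 'a mat \<Rightarrow> complex" where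
  "mu \<psi> = (\<lambda>a. if a \<in> Aset then L0 (chi_of \<psi>) (mk k (\<lambda>_. 0) (colK a) 0) * \<psi> (colK a) else 0)"

lemma L0_prop:
  assumes l: "\<xi> \<in> Lam" and w: "w \<in> Wset"
  shows "L0 (chi_of (cls \<xi> w)) \<in> Lam" "\<forall>c. L0 (chi_of (cls \<xi> w)) (Zm c) = \<xi> (Zm c)"
proof -
  have ch: "chi_of (cls \<xi> w) c = \<xi> (Zm c)" for c unfolding chi_of_def by (rule cls_chi[OF w])
  have ex: "\<exists>\<xi>'. \<xi>' \<in> Lam \<and> (\<forall>c. \<xi>' (Zm c) = chi_of (cls \<xi> w) c)" using l ch by metis
  show "L0 (chi_of (cls \<xi> w)) \<in> Lam" "\<forall>c. L0 (chi_of (cls \<xi> w)) (Zm c) = \<xi> (Zm c)"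
    using someI_ex[OF ex] ch unfolding L0_def by auto
qed

lemma colK_mk: "i \<in> {1..k} \<Longrightarrow> colK (mk k x y c) i = y i"
  unfolding colK_def by (simp add: mk_index)

lemma mu_in:
  assumes psi: "\<psi> \<in> Tset"
  shows "mu \<psi> \<in> Lam"
proof -
  obtain \<xi> w where l: "\<xi> \<in> Lam" and w: "w \<in> Wset" and pw: "\<psi> = cls \<xi> w"
    using psi unfolding Tset_def by blast
  define \<xi>0 where "\<xi>0 = L0 (chi_of \<psi>)"
  have l0: "\<xi>0 \<in> Lam" and l0z: "\<forall>c. \<xi>0 (Zm c) = \<xi> (Zm c)"
    using L0_prop[OF l w] unfolding \<xi>0_def pw by auto
  define v0 where "v0 = vv \<xi>0"
  have v0: "v0 \<in> carrier_vec d" "v0 \<noteq> 0\<^sub>v d" "\<forall>a\<in>Aset. \<rho> a *\<^sub>v v0 = \<xi>0 a \<cdot>\<^sub>v v0"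
    using vv[OF l0] unfolding v0_def by auto
  define x where "x = (\<lambda>j. - w j)"
  define h where "h = mk k x (\<lambda>_. 0) 0"
  have hH: "h \<in> Hei_set k" unfolding h_def by (rule mk_Hei)
  have hc: "\<rho> h \<in> carrier_mat d d" by (rule rho_c[OF hH])
  define v where "v = \<rho> h *\<^sub>v v0"
  have vc: "v \<in> carrier_vec d" unfolding v_def by (rule mult_mat_vec_carrier[OF hc v0(1)])
  have vnz: "v \<noteq> 0\<^sub>v d"
  proof
    assume "v = 0\<^sub>v d"
    then have "v0 = 0\<^sub>v d" using rho_cancel[OF hH v0(1)] unfolding v_def by blast
    then show False using v0(2) by simp
  qed
  have eig: "\<rho> a *\<^sub>v v = mu \<psi> a \<cdot>\<^sub>v v" if a: "a \<in> Aset" for a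
  proof -
    obtain y c where ayc: "a = mk k (\<lambda>_. 0) y c" using a unfolding Aset_def by blast
    define a' where "a' = mk k (\<lambda>_. 0) y (c - dotp k x y)"
    have aH: "a \<in> Hei_set k" using a Aset_Hei by blast
    have a'H: "a' \<in> Hei_set k" unfolding a'_def by (rule mk_Hei)
    have a'A: "a' \<in> Aset" unfolding a'_def by (rule Am_in)
    have p1: "a * h = mk k x y c" unfolding ayc h_def mk_mult by simp
    have p2: "h * a' = mk k x y c" unfolding a'_def h_def mk_mult by simp
    have "\<rho> a *\<^sub>v v = (\<rho> a * \<rho> h) *\<^sub>v v0" unfolding v_def
      by (rule assoc_mult_mat_vec[OF rho_c[OF aH] hc v0(1), symmetric])
    also have "\<rho> a * \<rho> h = \<rho> h * \<rho> a'"
      unfolding rho_mult[OF aH hH, symmetric] rho_mult[OF hH a'H, symmetric] p1 p2 ..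
    also have "(\<rho> h * \<rho> a') *\<^sub>v v0 = \<rho> h *\<^sub>v (\<rho> a' *\<^sub>v v0)"
      by (rule assoc_mult_mat_vec[OF hc rho_c[OF a'H] v0(1)])
    also have "\<rho> a' *\<^sub>v v0 = \<xi>0 a' \<cdot>\<^sub>v v0" using v0(3) a'A by blast
    also have "\<rho> h *\<^sub>v (\<xi>0 a' \<cdot>\<^sub>v v0) = \<xi>0 a' \<cdot>\<^sub>v v" unfolding v_def by (rule mult_mat_vec[OF hc v0(1)])
    also have "\<xi>0 a' = mu \<psi> a"
    proof -
      have dx: "dotp k x y = - dotp k w y" unfolding dotp_def x_def by (simp add: sum_negf)
      have a'split: "a' = mk k (\<lambda>_. 0) y 0 * Zm (c + dotp k w y)"
        unfolding a'_def A_mult dx by simp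
      have "\<xi>0 a' = \<xi>0 (mk k (\<lambda>_. 0) y 0) * \<xi>0 (Zm (c + dotp k w y))"
        unfolding a'split by (rule Lam_mult[OF l0 Am_in Am_in])
      also have "\<xi>0 (Zm (c + dotp k w y)) = \<xi> (Zm (c + dotp k w y))" using l0z by blast
      also have "\<xi> (Zm (c + dotp k w y)) = \<psi> (colK a)"
      proof -
        have "(\<Sum>i<k+1. w i * colK a i) = w 0 * c + (\<Sum>i\<in>{1..k}. w i * y i)"
          unfolding colK_def ayc by (rule mk_col_sum)
        also have "\<dots> = c + dotp k w y" using w unfolding Wset_def dotp_def by simp
        finally show ?thesis unfolding pw cls_def by simp
      qed
      also have "mk k (\<lambda>_. 0) y 0 = mk k (\<lambda>_. 0) (colK a) 0"
        by (rule mk_cong) (simp_all add: ayc colK_mk)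
      finally show ?thesis unfolding mu_def \<xi>0_def using a by simp
    qed
    finally show ?thesis .
  qed
  have out: "\<forall>a. a \<notin> Aset \<longrightarrow> mu \<psi> a = 0" unfolding mu_def by simp
  show ?thesis unfolding Lam_def using vc vnz eig out by blast
qed


lemma T_local: "\<psi> \<in> Tset \<Longrightarrow> \<forall>i<k+1. u i = u' i \<Longrightarrow> \<psi> u = \<psi> u'"
  unfolding Tset_def using cls_local by blast

lemma T_L0: "\<psi> \<in> Tset \<Longrightarrow> L0 (chi_of \<psi>) \<in> Lam"
  unfolding Tset_def using L0_prop(1) by blast

lemma colK_corner: "colK (mk k x y c) 0 = c"
  unfolding colK_def by (rule mk_corner)

lemma mu_Zm:
  assumes psi: "\<psi> \<in> Tset"
  shows "mu \<psi> (Zm c) = chi_of \<psi> c"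
proof -
  have m1: "mk k (\<lambda>_. 0) (colK (Zm c)) 0 = 1\<^sub>m (k+2)"
    unfolding mk_one[symmetric] by (rule mk_cong) (simp_all add: colK_mk)
  have "\<psi> (colK (Zm c)) = \<psi> (\<lambda>i. if i = 0 then c else 0)"
  proof (rule T_local[OF psi], intro allI impI)
    fix i assume i: "i < k+1"
    show "colK (Zm c) i = (if i = 0 then c else 0)"
    proof (cases "i = 0")
      case True then show ?thesis by (simp add: colK_corner)
    next
      case False then have "i \<in> {1..k}" using i by auto
      then show ?thesis using False by (simp add: colK_mk)
    qed
  qed
  note pc = this
  have "mu \<psi> (Zm c) = L0 (chi_of \<psi>) (mk k (\<lambda>_. 0) (colK (Zm c)) 0) * \<psi> (colK (Zm c))"
    unfolding mu_def using Am_in by simp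
  also have "\<dots> = \<psi> (\<lambda>i. if i = 0 then c else 0)" unfolding m1 Lam_one[OF T_L0[OF psi]] pc by simp
  also have "\<dots> = chi_of \<psi> c" unfolding chi_of_def ..
  finally show ?thesis .
qed

lemma mu_inj: "inj_on mu Tset"
proof
  fix \<psi>1 \<psi>2 assume p1: "\<psi>1 \<in> Tset" and p2: "\<psi>2 \<in> Tset" and eq: "mu \<psi>1 = mu \<psi>2"
  have ch: "chi_of \<psi>1 = chi_of \<psi>2"
  proof
    fix c show "chi_of \<psi>1 c = chi_of \<psi>2 c" using mu_Zm[OF p1, of c] mu_Zm[OF p2, of c] eq by simp
  qed
  show "\<psi>1 = \<psi>2"
  proof
    fix u :: "nat \<Rightarrow> 'a"
    define a where "a = mk k (\<lambda>_. 0) u (u 0)"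
    have aA: "a \<in> Aset" unfolding a_def by (rule Am_in)
    have loc: "\<forall>i<k+1. colK a i = u i"
    proof (intro allI impI)
      fix i assume i: "i < k+1"
      show "colK a i = u i"
      proof (cases "i = 0")
        case True then show ?thesis unfolding a_def by (simp add: colK_corner)
      next
        case False then have "i \<in> {1..k}" using i by auto
        then show ?thesis unfolding a_def by (simp add: colK_mk)
      qed
    qed
    let ?L = "L0 (chi_of \<psi>1) (mk k (\<lambda>_. 0) (colK a) 0)"
    have nz: "?L \<noteq> 0" by (rule Lam_nz[OF T_L0[OF p1] Am_in])
    have "?L * \<psi>1 (colK a) = ?L * \<psi>2 (colK a)"
      using fun_cong[OF eq, of a] aA ch unfolding mu_def by simp
    then have "\<psi>1 (colK a) = \<psi>2 (colK a)" using nz by simp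
    moreover have "\<psi>1 (colK a) = \<psi>1 u" by (rule T_local[OF p1 loc])
    moreover have "\<psi>2 (colK a) = \<psi>2 u" by (rule T_local[OF p2 loc])
    ultimately show "\<psi>1 u = \<psi>2 u" by simp
  qed
qed

lemma Tset_card: "card Tset \<le> d"
proof -
  have "card Tset \<le> card Lam"
    by (rule card_inj_on_le[OF mu_inj _ Lam_finite]) (use mu_in in blast)
  then show ?thesis using Lam_card by simp
qed

end




lemma U_facts:
  assumes "g \<in> carrier (U_mat m)"
  shows "g \<in> carrier_mat m m" "\<And>i. i < m \<Longrightarrow> g $$ (i,i) = 1" "\<And>i j. i < m \<Longrightarrow> j < i \<Longrightarrow> g $$ (i,j) = 0"
  using assms unfolding U_carrier by auto

lemma sum_lt_Suc_split:
  fixes f :: "nat \<Rightarrow> 'b::comm_monoid_add"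
  shows "(\<Sum>l<k+2. f l) = (\<Sum>l<k+1. f l) + f (k+1)"
  by simp

context heis_rep
begin

definition act :: "((nat \<Rightarrow> 'a) \<Rightarrow> complex) \<Rightarrow> 'a mat \<Rightarrow> ((nat \<Rightarrow> 'a) \<Rightarrow> complex)" where
  "act \<psi> g = (\<lambda>v. \<psi> (\<lambda>i. \<Sum>j<k+1. g $$ (i,j) * v j))"

definition cf :: "((nat \<Rightarrow> 'a) \<Rightarrow> complex) \<Rightarrow> 'a mat \<Rightarrow> complex" where
  "cf \<psi> g = \<psi> (colK g)"

lemma T_mult: "\<psi> \<in> Tset \<Longrightarrow> \<psi> (\<lambda>i. u i + u' i) = \<psi> u * \<psi> u'"
  unfolding Tset_def using cls_mult by blast

lemma T_zero: "\<psi> \<in> Tset \<Longrightarrow> \<psi> (\<lambda>_. 0) = 1"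
  unfolding Tset_def using cls_zero by blast

lemma act_T:
  assumes psi: "\<psi> \<in> Tset" and g: "g \<in> carrier (U_mat (k+2))"
  shows "act \<psi> g \<in> Tset"
proof -
  obtain \<xi> w where l: "\<xi> \<in> Lam" and w: "w \<in> Wset" and pw: "\<psi> = cls \<xi> w"
    using psi unfolding Tset_def by blast
  define wg where "wg j = (if j < k+1 then (\<Sum>i<k+1. w i * g $$ (i,j)) else 0)" for j
  have "wg 0 = (\<Sum>i<k+1. w i * g $$ (i,0))" unfolding wg_def by simp
  also have "\<dots> = w 0 * g $$ (0,0) + (\<Sum>i\<in>{1..k}. w i * g $$ (i,0))" by (rule sum_split0)
  also have "(\<Sum>i\<in>{1..k}. w i * g $$ (i,0)) = 0"
    by (rule sum.neutral) (use U_facts(3)[OF g] in auto)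
  also have "w 0 * g $$ (0,0) = 1" using U_facts(2)[OF g, of 0] w unfolding Wset_def by simp
  finally have wg0: "wg 0 = 1" by simp
  have wgW: "wg \<in> Wset" unfolding Wset_def using wg0 by (auto simp: wg_def)
  have "act \<psi> g = cls \<xi> wg"
  proof
    fix v :: "nat \<Rightarrow> 'a"
    have "(\<Sum>i<k+1. w i * (\<Sum>j<k+1. g $$ (i,j) * v j)) = (\<Sum>j<k+1. wg j * v j)"
    proof -
      have "(\<Sum>i<k+1. w i * (\<Sum>j<k+1. g $$ (i,j) * v j)) = (\<Sum>i<k+1. \<Sum>j<k+1. w i * g $$ (i,j) * v j)"
        by (simp only: sum_distrib_left mult.assoc)
      also have "\<dots> = (\<Sum>j<k+1. \<Sum>i<k+1. w i * g $$ (i,j) * v j)" by (rule sum.swap)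
      also have "\<dots> = (\<Sum>j<k+1. wg j * v j)"
        by (rule sum.cong[OF refl]) (simp add: wg_def sum_distrib_right del: sum.lessThan_Suc)
      finally show ?thesis .
    qed
    then show "act \<psi> g v = cls \<xi> wg v" unfolding act_def pw cls_def by simp
  qed
  then show ?thesis unfolding Tset_def using l wgW by blast
qed

lemma act_mult:
  assumes psi: "\<psi> \<in> Tset" and g: "g \<in> carrier (U_mat (k+2))" and h: "h \<in> carrier (U_mat (k+2))"
  shows "act \<psi> (g * h) = act (act \<psi> g) h"
proof
  fix v :: "nat \<Rightarrow> 'a"
  have gc: "g \<in> carrier_mat (k+2) (k+2)" and hc: "h \<in> carrier_mat (k+2) (k+2)"
    using U_facts(1) g h by auto
  have "\<psi> (\<lambda>i. \<Sum>j<k+1. (g * h) $$ (i,j) * v j) = \<psi> (\<lambda>i. \<Sum>l<k+1. g $$ (i,l) * (\<Sum>j<k+1. h $$ (l,j) * v j))"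
  proof (rule T_local[OF psi], intro allI impI)
    fix i assume i: "i < k+1"
    have "(\<Sum>j<k+1. (g * h) $$ (i,j) * v j) = (\<Sum>j<k+1. (\<Sum>l<k+1. g $$ (i,l) * h $$ (l,j)) * v j)"
    proof (rule sum.cong[OF refl])
      fix j assume j: "j \<in> {..<k+1}"
      have "(g * h) $$ (i,j) = (\<Sum>l<k+2. g $$ (i,l) * h $$ (l,j))"
        by (rule mat_mult_entry[OF gc hc]) (use i j in auto)
      also have "\<dots> = (\<Sum>l<k+1. g $$ (i,l) * h $$ (l,j)) + g $$ (i,k+1) * h $$ (k+1,j)"
        by (rule sum_lt_Suc_split)
      also have "h $$ (k+1,j) = 0" using U_facts(3)[OF h, of "k+1" j] j by simp
      finally show "(g * h) $$ (i,j) * v j = (\<Sum>l<k+1. g $$ (i,l) * h $$ (l,j)) * v j" by simp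
    qed
    also have "\<dots> = (\<Sum>j<k+1. \<Sum>l<k+1. g $$ (i,l) * h $$ (l,j) * v j)"
      by (simp only: sum_distrib_right)
    also have "\<dots> = (\<Sum>l<k+1. \<Sum>j<k+1. g $$ (i,l) * h $$ (l,j) * v j)" by (rule sum.swap)
    also have "\<dots> = (\<Sum>l<k+1. g $$ (i,l) * (\<Sum>j<k+1. h $$ (l,j) * v j))"
      by (simp only: sum_distrib_left mult.assoc)
    finally show "(\<Sum>j<k+1. (g * h) $$ (i,j) * v j) = (\<Sum>l<k+1. g $$ (i,l) * (\<Sum>j<k+1. h $$ (l,j) * v j))" .
  qed
  then show "act \<psi> (g * h) v = act (act \<psi> g) h v" unfolding act_def by simp
qed

lemma act_one:
  assumes psi: "\<psi> \<in> Tset"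
  shows "act \<psi> (1\<^sub>m (k+2)) = \<psi>"
proof
  fix v :: "nat \<Rightarrow> 'a"
  have "\<psi> (\<lambda>i. \<Sum>j<k+1. (1\<^sub>m (k+2) :: 'a mat) $$ (i,j) * v j) = \<psi> v"
  proof (rule T_local[OF psi], intro allI impI)
    fix i assume i: "i < k+1"
    have "(\<Sum>j<k+1. (1\<^sub>m (k+2) :: 'a mat) $$ (i,j) * v j) = (\<Sum>j<k+1. if i = j then v j else 0)"
      by (rule sum.cong[OF refl]) (use i in auto)
    also have "\<dots> = v i" using i by (simp add: sum.delta)
    finally show "(\<Sum>j<k+1. (1\<^sub>m (k+2) :: 'a mat) $$ (i,j) * v j) = v i" .
  qed
  then show "act \<psi> (1\<^sub>m (k+2)) v = \<psi> v" unfolding act_def by simp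
qed

lemma cf_mult:
  assumes psi: "\<psi> \<in> Tset" and g: "g \<in> carrier (U_mat (k+2))" and h: "h \<in> carrier (U_mat (k+2))"
  shows "cf \<psi> (g * h) = cf \<psi> g * cf (act \<psi> g) h"
proof -
  have gc: "g \<in> carrier_mat (k+2) (k+2)" and hc: "h \<in> carrier_mat (k+2) (k+2)"
    using U_facts(1) g h by auto
  have "cf \<psi> g * cf (act \<psi> g) h = \<psi> (\<lambda>i. colK g i + (\<Sum>j<k+1. g $$ (i,j) * colK h j))"
    unfolding cf_def act_def by (rule T_mult[OF psi, symmetric])
  also have "\<dots> = \<psi> (colK (g * h))"
  proof (rule T_local[OF psi], intro allI impI)
    fix i assume i: "i < k+1"
    have "(g * h) $$ (i,k+1) = (\<Sum>l<k+2. g $$ (i,l) * h $$ (l,k+1))"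
      by (rule mat_mult_entry[OF gc hc]) (use i in auto)
    also have "\<dots> = (\<Sum>l<k+1. g $$ (i,l) * h $$ (l,k+1)) + g $$ (i,k+1) * h $$ (k+1,k+1)"
      by (rule sum_lt_Suc_split)
    also have "h $$ (k+1,k+1) = 1" using U_facts(2)[OF h, of "k+1"] by simp
    finally show "colK g i + (\<Sum>j<k+1. g $$ (i,j) * colK h j) = colK (g * h) i"
      unfolding colK_def by (simp add: add.commute)
  qed
  finally show ?thesis unfolding cf_def by simp
qed

lemma cf_one:
  assumes psi: "\<psi> \<in> Tset"
  shows "cf \<psi> (1\<^sub>m (k+2)) = 1"
proof -
  have "\<psi> (colK (1\<^sub>m (k+2))) = \<psi> (\<lambda>_. 0)"
    by (rule T_local[OF psi]) (auto simp: colK_def)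
  then show ?thesis unfolding cf_def T_zero[OF psi] .
qed


lemma Zm_sep:
  assumes all: "\<forall>\<xi>\<in>Lam. \<xi> (Zm a) = \<xi> (Zm b)"
  shows "a = b"
proof -
  have "\<forall>\<xi>\<in>Lam. \<xi> (Zm (a - b)) = 1"
  proof
    fix \<xi> assume l: "\<xi> \<in> Lam"
    have "\<xi> (Zm a) = \<xi> (Zm (a - b) * Zm b)" unfolding Zm_add[symmetric] by simp
    also have "\<dots> = \<xi> (Zm (a - b)) * \<xi> (Zm b)" by (rule Lam_mult[OF l Am_in Am_in])
    finally have c: "\<xi> (Zm a) = \<xi> (Zm (a - b)) * \<xi> (Zm b)" .
    have e: "\<xi> (Zm a) = \<xi> (Zm b)" using all l by blast
    have "\<xi> (Zm (a - b)) * \<xi> (Zm b) = 1 * \<xi> (Zm b)" using c e by simp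
    then show "\<xi> (Zm (a - b)) = 1" using Lam_nz[OF l Am_in] by simp
  qed
  then have "a - b = 0" by (rule kernel)
  then show ?thesis by simp
qed

lemma Wsep:
  fixes X Y :: "nat \<Rightarrow> 'a"
  assumes all: "\<forall>w\<in>Wset. (\<Sum>i<k+1. w i * X i) = (\<Sum>i<k+1. w i * Y i)"
  shows "\<forall>i<k+1. X i = Y i"
proof -
  have sumx: "(\<Sum>i<k+1. (if i = 0 \<or> i = m then 1 else 0) * Z i) = Z 0 + (if m \<in> {1..k} then Z m else 0)"
    for Z :: "nat \<Rightarrow> 'a" and m
  proof -
    have "(\<Sum>i<k+1. (if i = 0 \<or> i = m then 1 else 0) * Z i) =
        Z 0 + (\<Sum>i\<in>{1..k}. (if i = 0 \<or> i = m then 1 else 0) * Z i)"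
      using sum_split0[of "\<lambda>i. (if i = 0 \<or> i = m then 1 else 0) * Z i" k] by simp
    also have "(\<Sum>i\<in>{1..k}. (if i = 0 \<or> i = m then 1 else 0) * Z i) = (\<Sum>i\<in>{1..k}. if i = m then Z i else 0)"
      by (rule sum.cong[OF refl]) auto
    also have "\<dots> = (if m \<in> {1..k} then Z m else 0)" by (simp add: sum.delta')
    finally show ?thesis by simp
  qed
  have inW: "(\<lambda>i. if i = 0 \<or> i = m then 1 else 0) \<in> Wset" if "m \<le> k" for m :: nat
    unfolding Wset_def using that by auto
  have a0: "(\<Sum>i<k+1. (if i = 0 \<or> i = m then 1 else 0) * X i) = (\<Sum>i<k+1. (if i = 0 \<or> i = m then 1 else 0) * Y i)"
    if "m \<le> k" for m
    by (rule bspec[OF all inW[OF that]])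
  have X0: "X 0 = Y 0"
    using a0[of 0] unfolding sumx by simp
  show ?thesis
  proof (intro allI impI)
    fix i assume i: "i < k+1"
    show "X i = Y i"
    proof (cases "i = 0")
      case True then show ?thesis using X0 by simp
    next
      case False
      then have im: "i \<in> {1..k}" using i by auto
      have "X 0 + X i = Y 0 + Y i"
        using a0[of i] im unfolding sumx by simp
      then show ?thesis using X0 by simp
    qed
  qed
qed

lemma colsep:
  assumes all: "\<forall>\<xi>\<in>Lam. \<forall>w\<in>Wset. cls \<xi> w X = cls \<xi> w Y"
  shows "\<forall>i<k+1. X i = Y i"
proof (rule Wsep, intro ballI)
  fix w assume w: "w \<in> Wset"
  show "(\<Sum>i<k+1. w i * X i) = (\<Sum>i<k+1. w i * Y i)"
    by (rule Zm_sep) (use all w in \<open>simp add: cls_def\<close>)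
qed

lemma faith:
  assumes g: "g \<in> carrier (U_mat (k+2))" and h: "h \<in> carrier (U_mat (k+2))"
    and eq: "\<forall>\<psi>\<in>Tset. act \<psi> g = act \<psi> h \<and> cf \<psi> g = cf \<psi> h"
  shows "g = h"
proof -
  have gc: "g \<in> carrier_mat (k+2) (k+2)" and hc: "h \<in> carrier_mat (k+2) (k+2)"
    using U_facts(1) g h by auto
  have cols: "\<forall>i<k+1. g $$ (i,j) = h $$ (i,j)" if j: "j < k+2" for j
  proof (rule colsep, intro ballI)
    fix \<xi> w assume l: "\<xi> \<in> Lam" and w: "w \<in> Wset"
    have psi: "cls \<xi> w \<in> Tset" unfolding Tset_def using l w by blast
    show "cls \<xi> w (\<lambda>i. g $$ (i,j)) = cls \<xi> w (\<lambda>i. h $$ (i,j))"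
    proof (cases "j = k+1")
      case True
      have "cf (cls \<xi> w) g = cf (cls \<xi> w) h" using eq psi by blast
      then show ?thesis unfolding cf_def colK_def True .
    next
      case False
      then have jk: "j < k+1" using j by simp
      define e where "e = (\<lambda>l. if l = j then (1::'a) else 0)"
      have ae: "act (cls \<xi> w) m e = cls \<xi> w (\<lambda>i. m $$ (i,j))" for m
      proof -
        have "(\<Sum>l<k+1. m $$ (i,l) * e l) = m $$ (i,j)" for i
          unfolding e_def using jk by (simp add: sum.delta if_distrib cong: if_cong)
        then show ?thesis unfolding act_def by simp
      qed
      have "act (cls \<xi> w) g e = act (cls \<xi> w) h e" using eq psi by metis
      then show ?thesis unfolding ae .
    qed
  qed
  show ?thesis
  proof (rule eq_matI)
    fix i j assume i: "i < dim_row h" and j: "j < dim_col h"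
    then have i: "i < k+2" and j: "j < k+2" using hc by auto
    show "g $$ (i,j) = h $$ (i,j)"
    proof (cases "i < k+1")
      case True then show ?thesis using cols[OF j] by blast
    next
      case False
      then have ik: "i = k+1" using i by simp
      show ?thesis
      proof (cases "j = k+1")
        case True then show ?thesis using ik U_facts(2)[OF g, of i] U_facts(2)[OF h, of i] i by simp
      next
        case False then have "j < i" using ik j by simp
        then show ?thesis using U_facts(3)[OF g i] U_facts(3)[OF h i] by simp
      qed
    qed
  qed (use gc hc in auto)
qed

lemma G_rep:
  assumes sub: "subgroup H (U_mat (k+2) :: 'a mat monoid)"
  shows "\<exists>\<rho>'. faithful_rep ((U_mat (k+2)) \<lparr> carrier := H \<rparr>) (card Tset) \<rho>'"
proof -
  let ?G = "(U_mat (k+2) :: 'a mat monoid) \<lparr> carrier := H \<rparr>"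
  have grpU: "group (U_mat (k+2) :: 'a mat monoid)" by (rule U_group[OF finU])
  have grpG: "group ?G" by (rule subgroup.subgroup_is_group[OF sub grpU])
  have HU: "H \<subseteq> carrier (U_mat (k+2))" using subgroup.subset[OF sub] .
  have cG: "carrier ?G = H" by simp
  have mG: "x \<otimes>\<^bsub>?G\<^esub> y = x * y" for x y by (simp add: U_mat_def)
  have oG: "\<one>\<^bsub>?G\<^esub> = 1\<^sub>m (k+2)" by (simp add: U_mat_def)
  show ?thesis
  proof (rule monomial_rep[OF grpG Tset_finite, where act = act and cf = cf])
    show "act t g \<in> Tset" if "t \<in> Tset" "g \<in> carrier ?G" for t g
      using act_T[OF that(1)] that(2) HU by auto
    show "act t (g \<otimes>\<^bsub>?G\<^esub> h) = act (act t g) h" if "t \<in> Tset" "g \<in> carrier ?G" "h \<in> carrier ?G" for t g h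
      unfolding mG using act_mult[OF that(1)] that(2,3) HU by auto
    show "act t \<one>\<^bsub>?G\<^esub> = t" if "t \<in> Tset" for t unfolding oG by (rule act_one[OF that])
    show "cf t (g \<otimes>\<^bsub>?G\<^esub> h) = cf t g * cf (act t g) h" if "t \<in> Tset" "g \<in> carrier ?G" "h \<in> carrier ?G" for t g h
      unfolding mG using cf_mult[OF that(1)] that(2,3) HU by auto
    show "cf t \<one>\<^bsub>?G\<^esub> = 1" if "t \<in> Tset" for t unfolding oG by (rule cf_one[OF that])
    show "g = h" if "g \<in> carrier ?G" "h \<in> carrier ?G" "\<forall>t\<in>Tset. act t g = act t h \<and> cf t g = cf t h" for g h
      using faith that HU by auto
  qed
qed

end


theorem theorem1p2:
  fixes k :: nat and H :: "('a::comm_ring_1) mat set"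
  assumes "finite_chain_ring TYPE('a)"
    and "(2::'a) dvd 1"
    and "k \<ge> 1"
    and "subgroup H (U_mat (k+2) :: 'a mat monoid)"
    and "Hei_set k \<subseteq> H"
  shows "m_faithful ((U_mat (k+2)) \<lparr> carrier := H \<rparr>) = m_faithful (Hei_group k :: 'a mat monoid)"
proof -
  note sub = assms(4)
  have finU: "finite (UNIV :: 'a set)" using assms(1) unfolding finite_chain_ring_def by blast
  let ?G = "(U_mat (k+2) :: 'a mat monoid) \<lparr> carrier := H \<rparr>"
  let ?Hei = "Hei_group k :: 'a mat monoid"
  have grpU: "group (U_mat (k+2) :: 'a mat monoid)" by (rule U_group[OF finU])
  have grpG: "group ?G" by (rule subgroup.subgroup_is_group[OF sub grpU])
  have HU: "H \<subseteq> carrier (U_mat (k+2))" using subgroup.subset[OF sub] .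
  have finH: "finite H"
  proof (rule finite_subset[OF _ finite_carrier_mat_fin[OF finU, of "k+2" "k+2"]])
    show "H \<subseteq> carrier_mat (k+2) (k+2)" using HU U_facts(1) by blast
  qed
  have ex: "\<exists>d \<rho>. faithful_rep ?G d \<rho>" by (rule regular_rep[OF grpG]) (simp add: finH)
  have restr: "faithful_rep ?Hei d \<rho>" if r: "faithful_rep ?G d \<rho>" for d \<rho>
  proof -
    have hom: "\<rho> \<in> hom ?G (GL_mat d)" and inj: "inj_on \<rho> H"
      using r unfolding faithful_rep_def by auto
    have "\<rho> \<in> hom ?Hei (GL_mat d)"
      using hom assms(5) unfolding hom_def Hei_group_def by (auto simp: U_mat_def)
    moreover have "inj_on \<rho> (carrier ?Hei)"
      using inj_on_subset[OF inj assms(5)] unfolding Hei_group_def by simp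
    ultimately show ?thesis unfolding faithful_rep_def by blast
  qed
  have low: "m_faithful ?G \<le> d" if r: "faithful_rep ?Hei d \<rho>" for d \<rho>
  proof -
    interpret heis_rep k d \<rho> by unfold_locales (rule finU, rule r)
    obtain \<rho>' where "faithful_rep ?G (card Tset) \<rho>'" using G_rep[OF sub] by blast
    then have "m_faithful ?G \<le> card Tset" unfolding m_faithful_def by (intro Least_le) blast
    then show ?thesis using Tset_card by simp
  qed
  obtain \<rho>1 where r1: "faithful_rep ?G (m_faithful ?G) \<rho>1"
    using LeastI_ex[OF ex] unfolding m_faithful_def by blast
  have r1': "faithful_rep ?Hei (m_faithful ?G) \<rho>1" by (rule restr[OF r1])
  have le1: "m_faithful ?Hei \<le> m_faithful ?G" unfolding m_faithful_def[of ?Hei]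
    by (rule Least_le) (use r1' in blast)
  have exH: "\<exists>d \<rho>. faithful_rep ?Hei d \<rho>" using r1' by blast
  obtain \<rho>2 where r2: "faithful_rep ?Hei (m_faithful ?Hei) \<rho>2"
    using LeastI_ex[OF exH] unfolding m_faithful_def by blast
  have le2: "m_faithful ?G \<le> m_faithful ?Hei" by (rule low[OF r2])
  show ?thesis using le1 le2 by simp
qed


end
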